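(* Let $\alpha$ be a composition of $r+1$, $\lambda_\alpha=\sum_{i\in D(\alpha)}\lambda_i$ and $z_\alpha=e^{\lambda_\alpha}$. If $w\in W$ satisfies $D(w)\subseteq D(\alpha)$, then \[ \overline\pi_wz_\alpha=e^{w\lambda_\alpha}+\sum_{[\lambda]_+<\lambda_\alpha}c_\lambda e^\lambda,\qquad c_\lambda\in\mathbb{Z}. \] Moreover, $e^{w\lambda_\alpha}$ is a descent monomial if and only if $D(w)=D(\alpha)$.
   Context: $W$ is the Weyl group of a root system of rank $r$ with simple roots $\gamma_1,\dots,\gamma_r$, simple reflections $s_1,\dots,s_r$, fundamental weights $\lambda_1,\dots,\lambda_r$, weight lattice $\Lambda$; $\mathbb{F}[\Lambda]$ is the group algebra with basis $e^\lambda$, $W$ acting by $we^\lambda=e^{w\lambda}$. Demazure operators $\pi_if=\frac{f-e^{-\gamma_i}s_i(f)}{1-e^{-\gamma_i}}$, $\overline\pi_i=\pi_i-1$, $\overline\pi_w$ defined via reduced words. $D(w)=\{i:\ell(ws_i)<\ell(w)\}$; compositions of $r+1$ correspond to subsets $D(\alpha)\subseteq[r]$ via partial sums. For $I\subseteq[r]$, $\lambda_I=\sum_{i\in I}\lambda_i$, and the descent monomial of $u\in W$ is $z_u=e^{u\lambda_{D(u)}}$. Weights are ordered by $\lambda\le\mu$ iff $\mu-\lambda$ is a nonnegative integer combination of simple roots; $[\lambda]_+$ is the unique dominant weight in the $W$-orbit of $\lambda$. *)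

theory Defs
  imports Main "HOL-Library.Function_Algebras" "HOL-Library.Poly_Mapping"
begin

text \<open>Root datum of rank r given by an r x r integer Cartan matrix A (indices 1..r),
  A i j = <gamma_i^vee, gamma_j>.  Weights are integer vectors in the basis of
  fundamental weights lambda_1..lambda_r, represented as functions nat => int
  vanishing outside {1..r}.\<close>

type_synonym wt = "nat \<Rightarrow> int"

definition in_lattice :: "nat \<Rightarrow> wt \<Rightarrow> bool" where
  "in_lattice r lam \<longleftrightarrow> (\<forall>i. i \<notin> {1..r} \<longrightarrow> lam i = 0)"

definition sroot :: "(nat \<Rightarrow> nat \<Rightarrow> int) \<Rightarrow> nat \<Rightarrow> nat \<Rightarrow> wt" where
  "sroot A r j = (\<lambda>k. if k \<in> {1..r} then A k j else 0)"

definition sref :: "(nat \<Rightarrow> nat \<Rightarrow> int) \<Rightarrow> nat \<Rightarrow> nat \<Rightarrow> wt \<Rightarrow> wt" where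
  "sref A r i lam = (\<lambda>k. lam k - lam i * sroot A r i k)"

inductive_set weyl :: "(nat \<Rightarrow> nat \<Rightarrow> int) \<Rightarrow> nat \<Rightarrow> (wt \<Rightarrow> wt) set"
  for A r where
  weyl_id: "id \<in> weyl A r"
| weyl_step: "i \<in> {1..r} \<Longrightarrow> w \<in> weyl A r \<Longrightarrow> sref A r i \<circ> w \<in> weyl A r"

text \<open>generalized Cartan matrix; with finite Weyl group this is exactly a
  Cartan matrix of a (finite, crystallographic) root system of rank r\<close>
definition is_gcm :: "(nat \<Rightarrow> nat \<Rightarrow> int) \<Rightarrow> nat \<Rightarrow> bool" where
  "is_gcm A r \<longleftrightarrow> (\<forall>i\<in>{1..r}. A i i = 2)
     \<and> (\<forall>i\<in>{1..r}. \<forall>j\<in>{1..r}. i \<noteq> j \<longrightarrow> A i j \<le> 0)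
     \<and> (\<forall>i\<in>{1..r}. \<forall>j\<in>{1..r}. A i j = 0 \<longleftrightarrow> A j i = 0)"

definition root_datum :: "(nat \<Rightarrow> nat \<Rightarrow> int) \<Rightarrow> nat \<Rightarrow> bool" where
  "root_datum A r \<longleftrightarrow> is_gcm A r \<and> finite (weyl A r)"

definition word_map :: "(nat \<Rightarrow> nat \<Rightarrow> int) \<Rightarrow> nat \<Rightarrow> nat list \<Rightarrow> wt \<Rightarrow> wt" where
  "word_map A r ws = foldr (\<lambda>i f. sref A r i \<circ> f) ws id"

definition wlen :: "(nat \<Rightarrow> nat \<Rightarrow> int) \<Rightarrow> nat \<Rightarrow> (wt \<Rightarrow> wt) \<Rightarrow> nat" where
  "wlen A r w = (LEAST n. \<exists>ws. set ws \<subseteq> {1..r} \<and> length ws = n \<and> word_map A r ws = w)"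

definition reduced_word :: "(nat \<Rightarrow> nat \<Rightarrow> int) \<Rightarrow> nat \<Rightarrow> (wt \<Rightarrow> wt) \<Rightarrow> nat list \<Rightarrow> bool" where
  "reduced_word A r w ws \<longleftrightarrow> set ws \<subseteq> {1..r} \<and> word_map A r ws = w \<and> length ws = wlen A r w"

definition descents :: "(nat \<Rightarrow> nat \<Rightarrow> int) \<Rightarrow> nat \<Rightarrow> (wt \<Rightarrow> wt) \<Rightarrow> nat set" where
  "descents A r w = {i \<in> {1..r}. wlen A r (w \<circ> sref A r i) < wlen A r w}"

text \<open>group algebra Z[Lambda]: finitely supported functions wt => int; e^lam = single lam 1\<close>
definition sact :: "(nat \<Rightarrow> nat \<Rightarrow> int) \<Rightarrow> nat \<Rightarrow> nat \<Rightarrow> (wt \<Rightarrow>\<^sub>0 int) \<Rightarrow> (wt \<Rightarrow>\<^sub>0 int)" where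
  "sact A r i f = Abs_poly_mapping (\<lambda>mu. Poly_Mapping.lookup f (sref A r i mu))"

definition demazure :: "(nat \<Rightarrow> nat \<Rightarrow> int) \<Rightarrow> nat \<Rightarrow> nat \<Rightarrow> (wt \<Rightarrow>\<^sub>0 int) \<Rightarrow> (wt \<Rightarrow>\<^sub>0 int)" where
  "demazure A r i f = (THE g. (1 - Poly_Mapping.single (- sroot A r i) 1) * g
        = f - Poly_Mapping.single (- sroot A r i) 1 * sact A r i f)"

definition demazure_bar :: "(nat \<Rightarrow> nat \<Rightarrow> int) \<Rightarrow> nat \<Rightarrow> nat \<Rightarrow> (wt \<Rightarrow>\<^sub>0 int) \<Rightarrow> (wt \<Rightarrow>\<^sub>0 int)" where
  "demazure_bar A r i f = demazure A r i f - f"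

definition demazure_bar_w :: "(nat \<Rightarrow> nat \<Rightarrow> int) \<Rightarrow> nat \<Rightarrow> (wt \<Rightarrow> wt) \<Rightarrow> (wt \<Rightarrow>\<^sub>0 int) \<Rightarrow> (wt \<Rightarrow>\<^sub>0 int)" where
  "demazure_bar_w A r w = foldr (\<lambda>i g. demazure_bar A r i \<circ> g) (SOME ws. reduced_word A r w ws) id"

definition fund_sum :: "nat \<Rightarrow> nat set \<Rightarrow> wt" where
  "fund_sum r I = (\<lambda>i. if i \<in> I \<inter> {1..r} then 1 else 0)"

definition descent_monomial :: "(nat \<Rightarrow> nat \<Rightarrow> int) \<Rightarrow> nat \<Rightarrow> (wt \<Rightarrow> wt) \<Rightarrow> (wt \<Rightarrow>\<^sub>0 int)" where
  "descent_monomial A r u = Poly_Mapping.single (u (fund_sum r (descents A r u))) 1"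

definition is_descent_monomial :: "(nat \<Rightarrow> nat \<Rightarrow> int) \<Rightarrow> nat \<Rightarrow> (wt \<Rightarrow>\<^sub>0 int) \<Rightarrow> bool" where
  "is_descent_monomial A r m \<longleftrightarrow> (\<exists>u\<in>weyl A r. m = descent_monomial A r u)"

definition weight_le :: "(nat \<Rightarrow> nat \<Rightarrow> int) \<Rightarrow> nat \<Rightarrow> wt \<Rightarrow> wt \<Rightarrow> bool" where
  "weight_le A r lam mu \<longleftrightarrow>
     (\<exists>n :: nat \<Rightarrow> nat. mu - lam = (\<lambda>k. \<Sum>j\<in>{1..r}. int (n j) * sroot A r j k))"

definition weight_less :: "(nat \<Rightarrow> nat \<Rightarrow> int) \<Rightarrow> nat \<Rightarrow> wt \<Rightarrow> wt \<Rightarrow> bool" where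
  "weight_less A r lam mu \<longleftrightarrow> weight_le A r lam mu \<and> lam \<noteq> mu"

definition dominant :: "nat \<Rightarrow> wt \<Rightarrow> bool" where
  "dominant r mu \<longleftrightarrow> in_lattice r mu \<and> (\<forall>i\<in>{1..r}. 0 \<le> mu i)"

definition dom_rep :: "(nat \<Rightarrow> nat \<Rightarrow> int) \<Rightarrow> nat \<Rightarrow> wt \<Rightarrow> wt" where
  "dom_rep A r lam = (THE mu. dominant r mu \<and> (\<exists>w\<in>weyl A r. w lam = mu))"

definition is_composition :: "nat \<Rightarrow> nat list \<Rightarrow> bool" where
  "is_composition n al \<longleftrightarrow> (\<forall>a\<in>set al. 0 < a) \<and> sum_list al = n"

definition comp_descents :: "nat list \<Rightarrow> nat set" where
  "comp_descents al = {sum_list (take k al) | k. 1 \<le> k \<and> k < length al}"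

end

theory Submission
  imports Defs
begin


definition smul :: "int \<Rightarrow> wt \<Rightarrow> wt" where "smul c x = (\<lambda>k. c * x k)"

lemma smul_apply[simp]: "smul c x k = c * x k" by (simp add: smul_def)

definition lin :: "(wt \<Rightarrow> wt) \<Rightarrow> bool" where
  "lin f \<longleftrightarrow> (\<forall>x y. f (x + y) = f x + f y) \<and> (\<forall>c x. f (smul c x) = smul c (f x))"

lemma smul_0: "smul 0 x = 0" by (simp add: smul_def fun_eq_iff)
lemma lin_zero: "lin f \<Longrightarrow> f 0 = 0"
proof -
  assume "lin f"
  then have "f (smul 0 0) = smul 0 (f 0)" unfolding lin_def by blast
  then show ?thesis by (simp add: smul_0)
qed

lemma lin_add: "lin f \<Longrightarrow> f (x + y) = f x + f y" unfolding lin_def by blast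
lemma lin_smul: "lin f \<Longrightarrow> f (smul c x) = smul c (f x)" unfolding lin_def by blast
lemma smul_neg: "smul (-1) x = - x" by (auto simp: smul_def fun_eq_iff)
lemma lin_neg: "lin f \<Longrightarrow> f (- x) = - f x"
  using lin_smul[of f "-1" x] by (simp add: smul_neg)
lemma lin_diff: "lin f \<Longrightarrow> f (x - y) = f x - f y"
  using lin_add[of f x "-y"] lin_neg[of f y] by simp
lemma lin_comp: "lin f \<Longrightarrow> lin g \<Longrightarrow> lin (f \<circ> g)" unfolding lin_def by auto
lemma lin_id: "lin id" unfolding lin_def by auto
lemma lin_sum: "lin f \<Longrightarrow> f (\<Sum>j\<in>S. v j) = (\<Sum>j\<in>S. f (v j))"
  by (induction S rule: infinite_finite_induct) (auto simp: lin_zero lin_add)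

lemma sum_fun_apply: "(\<Sum>j\<in>S. (v j :: wt)) k = (\<Sum>j\<in>S. v j k)"
  by (induction S rule: infinite_finite_induct) auto

lemma word_map_Nil[simp]: "word_map A r [] = id" by (simp add: word_map_def)
lemma word_map_Cons[simp]: "word_map A r (i # ws) = sref A r i \<circ> word_map A r ws" by (simp add: word_map_def)
lemma word_map_append: "word_map A r (xs @ ys) = word_map A r xs \<circ> word_map A r ys"
  by (induction xs) auto

lemma sref_apply: "sref A r i lam k = lam k - lam i * sroot A r i k" by (simp add: sref_def)

lemma lin_sref: "lin (sref A r i)"
  unfolding lin_def by (auto simp: sref_def fun_eq_iff algebra_simps)

lemma lin_word: "lin (word_map A r ws)"
proof (induction ws)
  case Nil then show ?case by (simp only: word_map_Nil lin_id)
next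
  case (Cons a ws) then show ?case by (simp only: word_map_Cons lin_comp lin_sref)
qed

locale RD =
  fixes A :: "nat \<Rightarrow> nat \<Rightarrow> int" and r :: nat
  assumes rd: "root_datum A r"
begin

abbreviation "W \<equiv> weyl A r"
abbreviation "sr \<equiv> sref A r"
abbreviation "gm \<equiv> sroot A r"
abbreviation "wm \<equiv> word_map A r"
abbreviation "R \<equiv> {1..r}"

lemma gcm: "is_gcm A r" using rd by (simp add: root_datum_def)
lemma finW: "finite W" using rd by (simp add: root_datum_def)
lemma Aii: "i \<in> R \<Longrightarrow> A i i = 2" using gcm by (simp add: is_gcm_def)
lemma Aij: "i \<in> R \<Longrightarrow> j \<in> R \<Longrightarrow> i \<noteq> j \<Longrightarrow> A i j \<le> 0" using gcm by (simp add: is_gcm_def)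
lemma Aij0: "i \<in> R \<Longrightarrow> j \<in> R \<Longrightarrow> A i j = 0 \<longleftrightarrow> A j i = 0" using gcm by (simp add: is_gcm_def)

lemma gm_apply: "gm j k = (if k \<in> R then A k j else 0)" by (simp add: sroot_def)
lemma gm_ii: "i \<in> R \<Longrightarrow> gm i i = 2" by (simp add: gm_apply Aii)

lemma sref_i: "i \<in> R \<Longrightarrow> sr i x i = - x i" by (simp add: sref_apply gm_ii)

lemma sref_invol[simp]: "i \<in> R \<Longrightarrow> sr i (sr i x) = x"
  by (auto simp: fun_eq_iff sref_i) (simp add: sref_apply gm_ii algebra_simps)

lemma sref_invol_comp: "i \<in> R \<Longrightarrow> sr i \<circ> sr i = id" by (auto simp: fun_eq_iff)

lemma sref_gm: "i \<in> R \<Longrightarrow> sr i (gm i) = - gm i"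
  by (auto simp: fun_eq_iff sref_apply gm_ii)

lemma weyl_word: "w \<in> W \<longleftrightarrow> (\<exists>ws. set ws \<subseteq> R \<and> w = wm ws)"
proof
  assume "w \<in> W" then show "\<exists>ws. set ws \<subseteq> R \<and> w = wm ws"
  proof induction
    case weyl_id then show ?case by (intro exI[of _ "[]"]) auto
  next
    case (weyl_step i w)
    then obtain ws where "set ws \<subseteq> R" "w = wm ws" by auto
    then show ?case using weyl_step by (intro exI[of _ "i # ws"]) auto
  qed
next
  assume "\<exists>ws. set ws \<subseteq> R \<and> w = wm ws"
  then obtain ws where ws: "set ws \<subseteq> R" "w = wm ws" by auto
  have "set ws \<subseteq> R \<Longrightarrow> wm ws \<in> W" for ws
    by (induction ws) (auto intro: weyl.intros simp: id_def[symmetric])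
  then show "w \<in> W" using ws by auto
qed

lemma wm_in: "set ws \<subseteq> R \<Longrightarrow> wm ws \<in> W" using weyl_word by auto

lemma W_lin: "w \<in> W \<Longrightarrow> lin w" using weyl_word lin_word by auto

lemma W_comp: "u \<in> W \<Longrightarrow> v \<in> W \<Longrightarrow> u \<circ> v \<in> W"
  unfolding weyl_word by (metis le_sup_iff set_append word_map_append)

lemma sref_W: "i \<in> R \<Longrightarrow> sr i \<in> W"
  using wm_in[of "[i]"] by auto

lemma wm_rev_inv: "set ws \<subseteq> R \<Longrightarrow> wm (rev ws) \<circ> wm ws = id"
  by (induction ws) (auto simp: word_map_append o_assoc fun_eq_iff)

lemma wm_inv_rev: "set ws \<subseteq> R \<Longrightarrow> wm ws \<circ> wm (rev ws) = id"
  using wm_rev_inv[of "rev ws"] by auto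

lemma inv_wm: "set ws \<subseteq> R \<Longrightarrow> inv (wm ws) = wm (rev ws)"
  using wm_rev_inv wm_inv_rev by (metis inv_unique_comp)

lemma W_inv: "w \<in> W \<Longrightarrow> inv w \<in> W \<and> w \<circ> inv w = id \<and> inv w \<circ> w = id"
  unfolding weyl_word using inv_wm wm_rev_inv wm_inv_rev by (metis set_rev)

lemma W_inv_in: "w \<in> W \<Longrightarrow> inv w \<in> W" using W_inv by blast
lemma W_inv_l: "w \<in> W \<Longrightarrow> inv w (w x) = x" using W_inv by (metis comp_apply id_apply)
lemma W_inv_r: "w \<in> W \<Longrightarrow> w (inv w x) = x" using W_inv by (metis comp_apply id_apply)
lemma W_inj: "w \<in> W \<Longrightarrow> w x = w y \<Longrightarrow> x = y" by (metis W_inv_l)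

end


context RD
begin

definition wl :: "nat set \<Rightarrow> (wt \<Rightarrow> wt) \<Rightarrow> nat" where
  "wl S v = (LEAST n. \<exists>ws. set ws \<subseteq> S \<and> length ws = n \<and> wm ws = v)"

definition gen :: "nat set \<Rightarrow> (wt \<Rightarrow> wt) \<Rightarrow> bool" where
  "gen S v \<longleftrightarrow> (\<exists>ws. set ws \<subseteq> S \<and> wm ws = v)"

lemma wlen_wl: "wlen A r = wl R"
  by (auto simp: fun_eq_iff wlen_def wl_def)

lemma gen_W: "gen R w \<longleftrightarrow> w \<in> W" unfolding gen_def weyl_word by auto

lemma wl_le: "set ws \<subseteq> S \<Longrightarrow> wl S (wm ws) \<le> length ws"
  unfolding wl_def by (rule Least_le) auto

lemma wl_ex: "gen S v \<Longrightarrow> \<exists>ws. set ws \<subseteq> S \<and> wm ws = v \<and> length ws = wl S v"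
proof -
  assume "gen S v"
  then obtain ws where "set ws \<subseteq> S" "wm ws = v" unfolding gen_def by auto
  then have "\<exists>n ws. set ws \<subseteq> S \<and> length ws = n \<and> wm ws = v" by auto
  from LeastI_ex[OF this] show ?thesis unfolding wl_def by auto
qed

lemma gen_comp: "gen S u \<Longrightarrow> gen S v \<Longrightarrow> gen S (u \<circ> v)"
  unfolding gen_def by (metis le_sup_iff set_append word_map_append)

lemma gen_sref: "i \<in> S \<Longrightarrow> gen S (sr i)"
  unfolding gen_def by (intro exI[of _ "[i]"]) auto

lemma gen_id: "gen S id"
  unfolding gen_def by (intro exI[of _ "[]"]) auto

lemma wl_comp: "gen S u \<Longrightarrow> gen S v \<Longrightarrow> wl S (u \<circ> v) \<le> wl S u + wl S v"
proof -
  assume "gen S u" "gen S v"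
  then obtain us vs where "set us \<subseteq> S" "wm us = u" "length us = wl S u"
     "set vs \<subseteq> S" "wm vs = v" "length vs = wl S v" using wl_ex by metis
  then show ?thesis using wl_le[of "us @ vs" S] by (simp add: word_map_append)
qed

lemma wl_id: "wl S id = 0"
  using wl_le[of "[]" S] by simp

lemma wl_0: "gen S v \<Longrightarrow> wl S v = 0 \<Longrightarrow> v = id"
  using wl_ex by fastforce

lemma wl_sref: "i \<in> S \<Longrightarrow> wl S (sr i) \<le> 1"
  using wl_le[of "[i]" S] by simp

lemma wl_mono: "S \<subseteq> S' \<Longrightarrow> gen S v \<Longrightarrow> wl S' v \<le> wl S v"
  using wl_ex wl_le by (metis order_trans)

lemma gen_sub: "S \<subseteq> S' \<Longrightarrow> gen S v \<Longrightarrow> gen S' v"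
  unfolding gen_def by blast

lemma wl_inv: "S \<subseteq> R \<Longrightarrow> gen S v \<Longrightarrow> wl S (inv v) = wl S v \<and> gen S (inv v)"
proof -
  assume S: "S \<subseteq> R" and g: "gen S v"
  have *: "wl S (inv u) \<le> wl S u \<and> gen S (inv u)" if gu: "gen S u" for u
  proof -
    obtain us where us: "set us \<subseteq> S" "wm us = u" "length us = wl S u" using wl_ex[OF gu] by blast
    then have "inv u = wm (rev us)" using inv_wm S by auto
    moreover have "\<exists>ws. set ws \<subseteq> S \<and> wm ws = wm (rev us)" using us by (intro exI[of _ "rev us"]) auto
    ultimately show ?thesis using wl_le[of "rev us" S] us unfolding gen_def by auto
  qed
  have "inv (inv v) = v"
  proof -
    obtain us where "set us \<subseteq> S" "wm us = v" using g unfolding gen_def by auto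
    then show ?thesis using inv_wm S by (metis rev_rev_ident set_rev subset_trans)
  qed
  then show ?thesis using *[OF g] *[of "inv v"] by (metis order_antisym)
qed

abbreviation "len \<equiv> wl R"

lemma len_comp: "u \<in> W \<Longrightarrow> v \<in> W \<Longrightarrow> len (u \<circ> v) \<le> len u + len v"
  using wl_comp gen_W by auto

lemma len_inv: "w \<in> W \<Longrightarrow> len (inv w) = len w"
  using wl_inv gen_W by auto

lemma len_sr_left: "i \<in> R \<Longrightarrow> w \<in> W \<Longrightarrow> len (sr i \<circ> w) \<le> len w + 1"
  using len_comp[of "sr i" w] wl_sref[of i R] sref_W by auto

lemma len_sr_right: "i \<in> R \<Longrightarrow> w \<in> W \<Longrightarrow> len (w \<circ> sr i) \<le> len w + 1"
  using len_comp[of w "sr i"] wl_sref[of i R] sref_W by auto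

lemma sr_cancel_left: "i \<in> R \<Longrightarrow> sr i \<circ> (sr i \<circ> w) = w"
  by (auto simp: fun_eq_iff)

lemma sr_cancel_right: "i \<in> R \<Longrightarrow> (w \<circ> sr i) \<circ> sr i = w"
  by (auto simp: fun_eq_iff)

lemma len_sr_left2: "i \<in> R \<Longrightarrow> w \<in> W \<Longrightarrow> len w \<le> len (sr i \<circ> w) + 1"
  using len_sr_left[of i "sr i \<circ> w"] sr_cancel_left[of i w] W_comp sref_W by auto

lemma len_sr_right2: "i \<in> R \<Longrightarrow> w \<in> W \<Longrightarrow> len w \<le> len (w \<circ> sr i) + 1"
  using len_sr_right[of i "w \<circ> sr i"] sr_cancel_right[of i w] W_comp sref_W by auto

lemma len_0: "w \<in> W \<Longrightarrow> len w = 0 \<Longrightarrow> w = id"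
  using wl_0 gen_W by auto

lemma first_letter: "w \<in> W \<Longrightarrow> len w > 0 \<Longrightarrow>
   \<exists>i w'. i \<in> R \<and> w' \<in> W \<and> w = sr i \<circ> w' \<and> len w' + 1 = len w"
proof -
  assume w: "w \<in> W" "len w > 0"
  then obtain ws where ws: "set ws \<subseteq> R" "wm ws = w" "length ws = len w" using wl_ex gen_W by blast
  then obtain i ws' where "ws = i # ws'" using w by (cases ws) auto
  then have "i \<in> R" "wm ws' \<in> W" "w = sr i \<circ> wm ws'" "len (wm ws') \<le> length ws'"
    using ws wm_in wl_le by auto
  moreover have "len w \<le> len (wm ws') + 1" using len_sr_left[OF \<open>i \<in> R\<close> \<open>wm ws' \<in> W\<close>] calculation by simp
  ultimately show ?thesis using ws \<open>ws = i # ws'\<close> by (intro exI[of _ i] exI[of _ "wm ws'"]) auto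
qed

lemma last_letter: "w \<in> W \<Longrightarrow> len w > 0 \<Longrightarrow>
   \<exists>i w'. i \<in> R \<and> w' \<in> W \<and> w = w' \<circ> sr i \<and> len w' + 1 = len w"
proof -
  assume w: "w \<in> W" "len w > 0"
  then obtain ws where ws: "set ws \<subseteq> R" "wm ws = w" "length ws = len w" using wl_ex gen_W by blast
  then obtain i ws' where "ws = ws' @ [i]" using w by (cases ws rule: rev_cases) auto
  then have "i \<in> R" "wm ws' \<in> W" "w = wm ws' \<circ> sr i" "len (wm ws') \<le> length ws'"
    using ws wm_in wl_le by (auto simp: word_map_append)
  moreover have "len w \<le> len (wm ws') + 1" using len_sr_right[OF \<open>i \<in> R\<close> \<open>wm ws' \<in> W\<close>] calculation by simp
  ultimately show ?thesis using ws \<open>ws = ws' @ [i]\<close> by (intro exI[of _ i] exI[of _ "wm ws'"]) auto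
qed

lemma reduced_tail: "reduced_word A r w (i # ws) \<Longrightarrow>
   i \<in> R \<and> reduced_word A r (wm ws) ws \<and> w = sr i \<circ> wm ws"
proof -
  assume a: "reduced_word A r w (i # ws)"
  then have i: "i \<in> R" "set ws \<subseteq> R" "w = sr i \<circ> wm ws" "Suc (length ws) = len w"
    unfolding reduced_word_def wlen_wl by auto
  have "len w \<le> len (wm ws) + 1" using len_sr_left[of i "wm ws"] i wm_in by auto
  moreover have "len (wm ws) \<le> length ws" using wl_le i by auto
  ultimately show ?thesis using i unfolding reduced_word_def wlen_wl by auto
qed

lemma reduced_ex: "w \<in> W \<Longrightarrow> \<exists>ws. reduced_word A r w ws"
  using wl_ex gen_W unfolding reduced_word_def wlen_wl by metis

lemma reduced_len: "reduced_word A r w ws \<Longrightarrow> length ws = len w \<and> w \<in> W \<and> w = wm ws \<and> set ws \<subseteq> R"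
  unfolding reduced_word_def wlen_wl using wm_in by auto

end


context RD
begin

definition B :: "wt \<Rightarrow> wt \<Rightarrow> int" where
  "B x y = (\<Sum>u\<in>W. \<Sum>k\<in>R. u x k * u y k)"

lemma B_sym: "B x y = B y x"
  unfolding B_def by (simp add: mult.commute)

lemma B_add_left: "B (x + y) z = B x z + B y z"
  unfolding B_def by (simp add: W_lin lin_add sum.distrib[symmetric] algebra_simps cong: sum.cong)

lemma B_smul_left: "B (smul c x) y = c * B x y"
  unfolding B_def by (simp add: W_lin lin_smul sum_distrib_left algebra_simps cong: sum.cong)

lemma B_add_right: "B z (x + y) = B z x + B z y"
  using B_add_left B_sym by metis

lemma B_smul_right: "B y (smul c x) = c * B y x"
  using B_smul_left B_sym by metis

lemma B_neg_left: "B (- x) y = - B x y"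
  using B_smul_left[of "-1" x y] by (simp add: smul_neg)

lemma B_neg_right: "B y (- x) = - B y x"
  using B_neg_left B_sym by metis

lemma B_diff_left: "B (x - y) z = B x z - B y z"
  using B_add_left[of x "-y" z] B_neg_left by simp

lemma B_diff_right: "B z (x - y) = B z x - B z y"
  using B_diff_left B_sym by metis

lemma B_zero_right: "B y 0 = 0"
  unfolding B_def by (simp add: W_lin lin_zero cong: sum.cong)

lemma B_sum_right: "B y (\<Sum>j\<in>S. v j) = (\<Sum>j\<in>S. B y (v j))"
proof (induction S rule: infinite_finite_induct)
  case (empty) show ?case by (simp only: sum.empty B_zero_right)
next
  case (infinite S)
  then have "sum v S = 0" "(\<Sum>j\<in>S. B y (v j)) = 0" by auto
  then show ?case by (simp only: B_zero_right)
next
  case (insert x F)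
  have "B y (sum v (insert x F)) = B y (v x + sum v F)" by (simp only: sum.insert[OF insert(1,2)])
  also have "\<dots> = B y (v x) + B y (sum v F)" by (rule B_add_right)
  finally show ?case using insert(3) by (simp only: sum.insert[OF insert(1,2)])
qed

lemma B_inv: "v \<in> W \<Longrightarrow> B (v x) (v y) = B x y"
proof -
  assume v: "v \<in> W"
  have bij: "bij_betw (\<lambda>u. u \<circ> v) W W"
  proof (rule bij_betw_byWitness[where f' = "\<lambda>u. u \<circ> inv v"])
    show "(\<lambda>u. u \<circ> v) ` W \<subseteq> W" using W_comp v by auto
    show "(\<lambda>u. u \<circ> inv v) ` W \<subseteq> W" using W_comp W_inv_in v by auto
    show "\<forall>x\<in>W. x \<circ> v \<circ> inv v = x" using W_inv[OF v] by (simp add: o_assoc[symmetric])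
    show "\<forall>y\<in>W. y \<circ> inv v \<circ> v = y" using W_inv[OF v] by (simp add: o_assoc[symmetric])
  qed
  have "B (v x) (v y) = (\<Sum>u\<in>W. (\<lambda>u. \<Sum>k\<in>R. u x k * u y k) (u \<circ> v))"
    unfolding B_def by simp
  also have "\<dots> = (\<Sum>u\<in>W. \<Sum>k\<in>R. u x k * u y k)"
    using sum.reindex_bij_betw[OF bij, of "\<lambda>u. \<Sum>k\<in>R. u x k * u y k"] by simp
  finally show ?thesis unfolding B_def .
qed

lemma B_self_ge: "B x x \<ge> (\<Sum>k\<in>R. x k * x k)"
proof -
  have "(\<Sum>k\<in>R. x k * x k) = (\<Sum>u\<in>{id}. \<Sum>k\<in>R. u x k * u x k)" by simp
  also have "\<dots> \<le> B x x" unfolding B_def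
    by (rule sum_mono2[OF finW]) (auto intro: weyl.intros sum_nonneg)
  finally show ?thesis .
qed

lemma B_self_nonneg: "B x x \<ge> 0"
  using B_self_ge[of x] by (smt (verit) sum_nonneg zero_le_square)

lemma B_self_zero: "B x x = 0 \<Longrightarrow> k \<in> R \<Longrightarrow> x k = 0"
proof -
  assume "B x x = 0" "k \<in> R"
  then have "(\<Sum>k\<in>R. x k * x k) \<le> 0" using B_self_ge[of x] by simp
  moreover have "(\<Sum>k\<in>R. x k * x k) \<ge> 0" by (intro sum_nonneg) simp
  ultimately have "(\<Sum>k\<in>R. x k * x k) = 0" by linarith
  then have "\<forall>k\<in>R. x k * x k = 0" by (subst sum_nonneg_eq_0_iff[symmetric]) auto
  then show "x k = 0" using \<open>k \<in> R\<close> by simp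
qed

lemma lattice_zero: "in_lattice r x \<Longrightarrow> (\<forall>k\<in>R. x k = 0) \<Longrightarrow> x = 0"
  unfolding in_lattice_def by (auto simp: fun_eq_iff)

lemma B_key: "i \<in> R \<Longrightarrow> 2 * B x (gm i) = x i * B (gm i) (gm i)"
proof -
  assume i: "i \<in> R"
  define y where "y = smul 2 x - smul (x i) (gm i)"
  have yi: "y i = 0" using gm_ii[OF i] by (simp add: y_def)
  have "sr i y = y" by (auto simp: fun_eq_iff sref_apply yi)
  have "B y (gm i) = B (sr i y) (sr i (gm i))" using B_inv[OF sref_W[OF i]] by simp
  also have "\<dots> = B y (- gm i)" using \<open>sr i y = y\<close> sref_gm[OF i] by simp
  finally have "B y (gm i) = 0" using B_neg_right by simp
  then show ?thesis unfolding y_def by (simp add: B_diff_left B_smul_left)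
qed

definition gn :: "nat \<Rightarrow> int" where "gn j = B (gm j) (gm j)"

lemma gm_lattice: "in_lattice r (gm j)" by (simp add: in_lattice_def gm_apply)

lemma gn_pos: "j \<in> R \<Longrightarrow> gn j > 0"
proof -
  assume j: "j \<in> R"
  have "gn j \<noteq> 0" using B_self_zero[of "gm j" j] gm_ii[OF j] j unfolding gn_def by auto
  then show ?thesis using B_self_nonneg[of "gm j"] unfolding gn_def by simp
qed

definition comb :: "(nat \<Rightarrow> nat) \<Rightarrow> wt" where
  "comb n = (\<lambda>k. \<Sum>j\<in>R. int (n j) * gm j k)"

definition Qp :: "wt \<Rightarrow> bool" where "Qp v \<longleftrightarrow> (\<exists>n. v = comb n)"

lemma weight_le_Qp: "weight_le A r lam mu \<longleftrightarrow> Qp (mu - lam)"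
  unfolding weight_le_def Qp_def comb_def by auto

lemma comb_sum: "comb n = (\<Sum>j\<in>R. smul (int (n j)) (gm j))"
  unfolding comb_def by (auto simp: fun_eq_iff sum_fun_apply)

lemma B_comb: "2 * B x (comb n) = (\<Sum>j\<in>R. int (n j) * x j * gn j)"
proof -
  have "2 * B x (comb n) = (\<Sum>j\<in>R. int (n j) * (2 * B x (gm j)))"
    by (simp add: comb_sum B_sum_right B_smul_right sum_distrib_left algebra_simps)
  also have "\<dots> = (\<Sum>j\<in>R. int (n j) * x j * gn j)"
    by (rule sum.cong) (auto simp: B_key gn_def)
  finally show ?thesis .
qed

lemma comb_lattice: "in_lattice r (comb n)" by (auto simp: in_lattice_def comb_def gm_apply)

definition rho :: wt where "rho = (\<lambda>k. if k \<in> R then 1 else 0)"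

lemma comb_zero: "(\<forall>j\<in>R. n j = 0) \<Longrightarrow> comb n = 0"
  unfolding comb_def by (auto simp: fun_eq_iff)

lemma B_rho_comb: "2 * B rho (comb n) = (\<Sum>j\<in>R. int (n j) * gn j)"
  using B_comb[of rho n] by (simp add: rho_def)

lemma B_rho_comb_nonneg: "B rho (comb n) \<ge> 0"
proof -
  have "(\<Sum>j\<in>R. int (n j) * gn j) \<ge> 0" using gn_pos by (intro sum_nonneg) (simp add: order.strict_implies_order)
  then show ?thesis using B_rho_comb[of n] by simp
qed

lemma B_rho_comb_zero: "B rho (comb n) = 0 \<Longrightarrow> j \<in> R \<Longrightarrow> n j = 0"
proof -
  assume a: "B rho (comb n) = 0" "j \<in> R"
  have "(\<Sum>j\<in>R. int (n j) * gn j) = 0" using B_rho_comb[of n] a by simp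
  moreover have "\<forall>j\<in>R. int (n j) * gn j \<ge> 0" using gn_pos by (simp add: order.strict_implies_order)
  ultimately have "\<forall>j\<in>R. int (n j) * gn j = 0" by (subst sum_nonneg_eq_0_iff[symmetric]) auto
  then show ?thesis using a gn_pos[of j] by auto
qed

lemma Qp_antisym: "Qp v \<Longrightarrow> Qp (- v) \<Longrightarrow> v = 0"
proof -
  assume "Qp v" "Qp (- v)"
  then obtain n m where n: "v = comb n" and m: "- v = comb m" unfolding Qp_def by auto
  have "B rho v \<ge> 0" "B rho (- v) \<ge> 0" using n m B_rho_comb_nonneg by auto
  then have "B rho (comb n) = 0" using B_neg_right n by simp
  then have "\<forall>j\<in>R. n j = 0" using B_rho_comb_zero by blast
  then show "v = 0" using n comb_zero by simp
qed

lemma Qp_0: "Qp 0" unfolding Qp_def using comb_zero[of "\<lambda>_. 0"] by auto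

lemma comb_add: "comb n + comb m = comb (\<lambda>j. n j + m j)"
  unfolding comb_def by (auto simp: fun_eq_iff sum.distrib[symmetric] algebra_simps)

lemma Qp_add: "Qp v \<Longrightarrow> Qp w \<Longrightarrow> Qp (v + w)"
  unfolding Qp_def using comb_add by metis

lemma Qp_smul: "Qp v \<Longrightarrow> Qp (smul (int c) v)"
proof -
  assume "Qp v" then obtain n where n: "v = comb n" unfolding Qp_def by auto
  have "smul (int c) v = comb (\<lambda>j. c * n j)" unfolding n comb_def
    by (auto simp: fun_eq_iff sum_distrib_left algebra_simps)
  then show ?thesis unfolding Qp_def by blast
qed

lemma Qp_gm: "i \<in> R \<Longrightarrow> Qp (gm i)"
proof -
  assume i: "i \<in> R"
  have "gm i k = comb (\<lambda>j. if j = i then 1 else 0) k" for k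
  proof -
    have "comb (\<lambda>j. if j = i then 1 else 0) k = (\<Sum>j\<in>R. (if j = i then gm j k else 0))"
      unfolding comb_def by (rule sum.cong) auto
    then show ?thesis using i by simp
  qed
  then have "gm i = comb (\<lambda>j. if j = i then 1 else 0)" by auto
  then show ?thesis unfolding Qp_def by blast
qed

lemma Qp_sum: "finite S \<Longrightarrow> (\<forall>j\<in>S. Qp (f j)) \<Longrightarrow> Qp (\<Sum>j\<in>S. smul (int (c j)) (f j))"
  by (induction S rule: finite_induct) (auto intro: Qp_add Qp_smul Qp_0)

lemma lin_comb: "lin u \<Longrightarrow> u (comb n) = (\<Sum>j\<in>R. smul (int (n j)) (u (gm j)))"
proof -
  assume u: "lin u"
  have "u (comb n) = (\<Sum>j\<in>R. u (smul (int (n j)) (gm j)))" unfolding comb_sum by (rule lin_sum[OF u])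
  also have "\<dots> = (\<Sum>j\<in>R. smul (int (n j)) (u (gm j)))" by (rule sum.cong) (auto simp only: lin_smul[OF u])
  finally show ?thesis .
qed

lemma gm_nonzero: "j \<in> R \<Longrightarrow> gm j \<noteq> 0"
  using gm_ii by (metis zero_fun_def zero_neq_numeral)

end


primrec alt :: "nat \<Rightarrow> nat \<Rightarrow> nat \<Rightarrow> nat list" where
  "alt x y 0 = []"
| "alt x y (Suc n) = (if even n then y else x) # alt x y n"

lemma alt_length[simp]: "length (alt x y k) = k" by (induction k) auto
lemma alt_set: "set (alt x y k) \<subseteq> {x, y}" by (induction k) auto

lemma alt_prefix: "m \<le> k \<Longrightarrow> \<exists>pre. alt x y k = pre @ alt x y m"
proof (induction k)
  case 0 then show ?case by auto
next
  case (Suc k)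
  show ?case
  proof (cases "m = Suc k")
    case True then show ?thesis by (intro exI[of _ "[]"]) auto
  next
    case False
    then obtain pre where "alt x y k = pre @ alt x y m" using Suc by auto
    then show ?thesis by (intro exI[of _ "(if even k then y else x) # pre"]) auto
  qed
qed

lemma alt_last: "m \<ge> 1 \<Longrightarrow> \<exists>pre. alt x y m = pre @ [y]"
  using alt_prefix[of 1 m x y] by auto

context RD
begin

lemma ab_bound: "i \<in> R \<Longrightarrow> j \<in> R \<Longrightarrow> i \<noteq> j \<Longrightarrow> A i j * A j i \<le> 3"
proof -
  assume i: "i \<in> R" and j: "j \<in> R" and ij: "i \<noteq> j"
  define P where "P = gn i"
  define Q where "Q = gn j"
  define C where "C = B (gm i) (gm j)"
  have P: "P > 0" "Q > 0" using gn_pos i j P_def Q_def by auto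
  have C1: "2 * C = A j i * Q" using B_key[OF j, of "gm i"] j by (simp add: C_def Q_def gn_def gm_apply)
  have C2: "2 * C = A i j * P" using B_key[OF i, of "gm j"] i by (simp add: C_def P_def gn_def gm_apply B_sym)
  have "A i j * P \<le> 0" using Aij[OF i j ij] P by (intro mult_nonpos_nonneg) auto
  then have Cle: "C \<le> 0" using C2 by linarith
  define v where "v = smul Q (gm i) - smul C (gm j)"
  have Bv: "B v v = Q * (P * Q - C * C)"
    unfolding v_def by (simp add: B_diff_left B_diff_right B_smul_left B_smul_right P_def Q_def C_def gn_def B_sym algebra_simps)
  have "B v v \<ge> 0" by (rule B_self_nonneg)
  then have PQC: "P * Q - C * C \<ge> 0" using Bv P by (simp add: zero_le_mult_iff)
  have "4 * (C * C) = (2 * C) * (2 * C)" by simp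
  also have "\<dots> = (A i j * P) * (A j i * Q)" using C1 C2 by simp
  also have "\<dots> = (A i j * A j i) * (P * Q)" by (simp add: ac_simps)
  finally have four: "4 * (C * C) = (A i j * A j i) * (P * Q)" .
  have PQ: "P * Q > 0" using P by simp
  have le4: "A i j * A j i \<le> 4"
  proof (rule ccontr)
    assume "\<not> A i j * A j i \<le> 4"
    then have "A i j * A j i \<ge> 5" by simp
    then have "(A i j * A j i) * (P * Q) \<ge> 5 * (P * Q)" using P by (intro mult_right_mono) auto
    then show False using four PQC PQ by linarith
  qed
  moreover have "A i j * A j i \<noteq> 4"
  proof
    assume "A i j * A j i = 4"
    then have "C * C = P * Q" using four by simp
    then have "B v v = 0" using Bv by simp
    then have "v = 0" using B_self_zero[of v] lattice_zero[of v]
      by (simp add: v_def in_lattice_def gm_apply)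
    have "2 * B rho v = Q * P - C * Q" unfolding v_def
      using B_key[OF i, of rho] B_key[OF j, of rho] i j
      by (simp add: B_diff_right B_smul_right rho_def P_def Q_def gn_def algebra_simps)
    moreover have "B rho v = 0" using \<open>v = 0\<close> B_zero_right by simp
    moreover have "C * Q \<le> 0" using Cle P by (intro mult_nonpos_nonneg) auto
    moreover have "Q * P > 0" using P by simp
    ultimately show False by linarith
  qed
  ultimately show ?thesis by simp
qed

lemma ab_cases:
  fixes a b :: int
  assumes "a \<le> 0" "b \<le> 0" "a * b \<le> 3" "a = 0 \<longleftrightarrow> b = 0"
  shows "(a = 0 \<and> b = 0) \<or> (a = -1 \<and> b = -1) \<or> (a = -1 \<and> b = -2) \<or> (a = -2 \<and> b = -1)
     \<or> (a = -1 \<and> b = -3) \<or> (a = -3 \<and> b = -1)"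
proof -
  have a: "a \<ge> -3"
  proof (rule ccontr)
    assume "\<not> a \<ge> -3"
    then have "-a \<ge> 4" "-b \<ge> 1" using assms by auto
    then have "(-a) * (-b) \<ge> 4 * 1" by (intro mult_mono) auto
    then have "a * b \<ge> 4" by simp
    then show False using assms by simp
  qed
  have b: "b \<ge> -3"
  proof (rule ccontr)
    assume "\<not> b \<ge> -3"
    then have "-b \<ge> 4" "-a \<ge> 1" using assms by auto
    then have "(-b) * (-a) \<ge> 4 * 1" by (intro mult_mono) auto
    then have "a * b \<ge> 4" by (simp add: mult.commute)
    then show False using assms by simp
  qed
  have "a \<in> {-3, -2, -1, 0}" "b \<in> {-3, -2, -1, 0}" using a b assms(1,2) by auto
  then show ?thesis using assms by auto
qed

end


lemma alt_num: "alt x y (numeral n) = (if even (numeral n - 1::nat) then y else x) # alt x y (numeral n - 1)"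
proof -
  obtain m where m: "(numeral n::nat) = Suc m" using not0_implies_Suc[of "numeral n"] by auto
  show ?thesis unfolding m by simp
qed
lemma alt1: "alt x y 1 = [y]" using alt.simps(2)[of x y 0] by simp
lemma alt2: "alt x y 2 = [x, y]" by (simp add: alt_num)
lemma alt3: "alt x y 3 = [y, x, y]" by (simp add: alt_num)
lemma alt4: "alt x y 4 = [x, y, x, y]" by (simp add: alt_num)
lemma alt5: "alt x y 5 = [y, x, y, x, y]" by (simp add: alt_num)
lemma alt6: "alt x y 6 = [x, y, x, y, x, y]" by (simp add: alt_num)
lemmas alt_nums = alt1 alt2 alt3 alt4 alt5 alt6

lemma all_lt_num: "(\<forall>k<(2::nat). P k) = (P 0 \<and> P 1)" "(\<forall>k<(3::nat). P k) = (P 0 \<and> P 1 \<and> P 2)"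
  "(\<forall>k<(4::nat). P k) = (P 0 \<and> P 1 \<and> P 2 \<and> P 3)"
  "(\<forall>k<(6::nat). P k) = (P 0 \<and> P 1 \<and> P 2 \<and> P 3 \<and> P 4 \<and> P 5)"
proof -
  have a: "k < (6::nat) \<Longrightarrow> k = 0 \<or> k = 1 \<or> k = 2 \<or> k = 3 \<or> k = 4 \<or> k = 5" for k by arith
  show "(\<forall>k<(2::nat). P k) = (P 0 \<and> P 1)" using a by (metis One_nat_def less_2_cases numeral_2_eq_2 zero_less_numeral one_less_numeral_iff semiring_norm(76))
  show "(\<forall>k<(3::nat). P k) = (P 0 \<and> P 1 \<and> P 2)"
  proof
    assume "\<forall>k<(3::nat). P k" then show "P 0 \<and> P 1 \<and> P 2" by simp
  next
    assume "P 0 \<and> P 1 \<and> P 2" then show "\<forall>k<(3::nat). P k" using a by (metis less_SucE numeral_3_eq_3 numeral_2_eq_2 One_nat_def less_one)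
  qed
  show "(\<forall>k<(4::nat). P k) = (P 0 \<and> P 1 \<and> P 2 \<and> P 3)"
  proof
    assume "\<forall>k<(4::nat). P k" then show "P 0 \<and> P 1 \<and> P 2 \<and> P 3" by simp
  next
    assume p: "P 0 \<and> P 1 \<and> P 2 \<and> P 3"
    have "k < (4::nat) \<Longrightarrow> k = 0 \<or> k = 1 \<or> k = 2 \<or> k = 3" for k by arith
    then show "\<forall>k<(4::nat). P k" using p by blast
  qed
  show "(\<forall>k<(6::nat). P k) = (P 0 \<and> P 1 \<and> P 2 \<and> P 3 \<and> P 4 \<and> P 5)"
  proof
    assume "\<forall>k<(6::nat). P k" then show "P 0 \<and> P 1 \<and> P 2 \<and> P 3 \<and> P 4 \<and> P 5" by simp
  next
    assume p: "P 0 \<and> P 1 \<and> P 2 \<and> P 3 \<and> P 4 \<and> P 5"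
    then show "\<forall>k<(6::nat). P k" using a by blast
  qed
qed

context RD
begin

definition E :: "nat \<Rightarrow> nat \<Rightarrow> wt \<Rightarrow> int \<Rightarrow> int \<Rightarrow> wt" where
  "E s t l p q = (\<lambda>k. l k + p * gm s k + q * gm t k)"

lemma E_0: "E s t l 0 0 = l" by (simp add: E_def)
lemma E_eq: "p = p' \<Longrightarrow> q = q' \<Longrightarrow> E s t l p q = E s t l p' q'" by simp

lemma sr_E1: "s \<in> R \<Longrightarrow> sr s (E s t l p q) = E s t l (p - (l s + 2 * p + A s t * q)) q"
  by (auto simp: fun_eq_iff E_def sref_apply gm_apply Aii algebra_simps)

lemma sr_E2: "t \<in> R \<Longrightarrow> sr t (E s t l p q) = E s t l p (q - (l t + A t s * p + 2 * q))"
  by (auto simp: fun_eq_iff E_def sref_apply gm_apply Aii algebra_simps)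

lemma gm_E: "gm s = E s t 0 1 0" by (simp add: E_def fun_eq_iff)

lemma E_exI: "0 \<le> p \<Longrightarrow> 0 \<le> q \<Longrightarrow> (\<exists>x\<ge>0. \<exists>y\<ge>0. E s t l p q = E s t l x y)"
  by blast

lemma all_lt_Suc: "(\<forall>k<Suc n. P k) = ((\<forall>k<n. P k) \<and> P n)"
  using less_Suc_eq by auto

lemma rk2_case0:
  assumes "s \<in> R" "t \<in> R" "A s t = 0" "A t s = 0"
  shows "wm (alt s t 2) = wm (alt t s 2) \<and> (\<forall>k<2. \<exists>x y. 0 \<le> x \<and> 0 \<le> y \<and> wm (alt s t k) (gm s) = E s t 0 x y)"
proof
  show "wm (alt s t 2) = wm (alt t s 2)"
  proof
    fix l
    have "wm (alt s t 2) (E s t l 0 0) = wm (alt t s 2) (E s t l 0 0)"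
      using assms apply (simp add: alt_nums sr_E1 sr_E2 algebra_simps)
      apply (rule E_eq; linarith)?
      done
    then show "wm (alt s t 2) l = wm (alt t s 2) l" by (simp add: E_0)
  qed
  show "\<forall>k<2. \<exists>x y. 0 \<le> x \<and> 0 \<le> y \<and> wm (alt s t k) (gm s) = E s t 0 x y"
    unfolding gm_E[of s t] using assms
    by (simp add: all_lt_num alt_nums sr_E1 sr_E2 algebra_simps E_exI)
qed

lemma rk2_case1:
  assumes "s \<in> R" "t \<in> R" "A s t = -1" "A t s = -1"
  shows "wm (alt s t 3) = wm (alt t s 3) \<and> (\<forall>k<3. \<exists>x y. 0 \<le> x \<and> 0 \<le> y \<and> wm (alt s t k) (gm s) = E s t 0 x y)"
proof
  show "wm (alt s t 3) = wm (alt t s 3)"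
  proof
    fix l
    have "wm (alt s t 3) (E s t l 0 0) = wm (alt t s 3) (E s t l 0 0)"
      using assms apply (simp add: alt_nums sr_E1 sr_E2 algebra_simps)
      apply (rule E_eq; linarith)?
      done
    then show "wm (alt s t 3) l = wm (alt t s 3) l" by (simp add: E_0)
  qed
  show "\<forall>k<3. \<exists>x y. 0 \<le> x \<and> 0 \<le> y \<and> wm (alt s t k) (gm s) = E s t 0 x y"
    unfolding gm_E[of s t] using assms
    by (simp add: all_lt_num alt_nums sr_E1 sr_E2 algebra_simps E_exI)
qed

lemma rk2_case2:
  assumes "s \<in> R" "t \<in> R" "A s t = -1" "A t s = -2"
  shows "wm (alt s t 4) = wm (alt t s 4) \<and> (\<forall>k<4. \<exists>x y. 0 \<le> x \<and> 0 \<le> y \<and> wm (alt s t k) (gm s) = E s t 0 x y)"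
proof
  show "wm (alt s t 4) = wm (alt t s 4)"
  proof
    fix l
    have "wm (alt s t 4) (E s t l 0 0) = wm (alt t s 4) (E s t l 0 0)"
      using assms apply (simp add: alt_nums sr_E1 sr_E2 algebra_simps)
      apply (rule E_eq; linarith)?
      done
    then show "wm (alt s t 4) l = wm (alt t s 4) l" by (simp add: E_0)
  qed
  show "\<forall>k<4. \<exists>x y. 0 \<le> x \<and> 0 \<le> y \<and> wm (alt s t k) (gm s) = E s t 0 x y"
    unfolding gm_E[of s t] using assms
    by (simp add: all_lt_num alt_nums sr_E1 sr_E2 algebra_simps E_exI)
qed

lemma rk2_case3:
  assumes "s \<in> R" "t \<in> R" "A s t = -2" "A t s = -1"
  shows "wm (alt s t 4) = wm (alt t s 4) \<and> (\<forall>k<4. \<exists>x y. 0 \<le> x \<and> 0 \<le> y \<and> wm (alt s t k) (gm s) = E s t 0 x y)"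
proof
  show "wm (alt s t 4) = wm (alt t s 4)"
  proof
    fix l
    have "wm (alt s t 4) (E s t l 0 0) = wm (alt t s 4) (E s t l 0 0)"
      using assms apply (simp add: alt_nums sr_E1 sr_E2 algebra_simps)
      apply (rule E_eq; linarith)?
      done
    then show "wm (alt s t 4) l = wm (alt t s 4) l" by (simp add: E_0)
  qed
  show "\<forall>k<4. \<exists>x y. 0 \<le> x \<and> 0 \<le> y \<and> wm (alt s t k) (gm s) = E s t 0 x y"
    unfolding gm_E[of s t] using assms
    by (simp add: all_lt_num alt_nums sr_E1 sr_E2 algebra_simps E_exI)
qed

lemma rk2_case4:
  assumes "s \<in> R" "t \<in> R" "A s t = -1" "A t s = -3"
  shows "wm (alt s t 6) = wm (alt t s 6) \<and> (\<forall>k<6. \<exists>x y. 0 \<le> x \<and> 0 \<le> y \<and> wm (alt s t k) (gm s) = E s t 0 x y)"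
proof
  show "wm (alt s t 6) = wm (alt t s 6)"
  proof
    fix l
    have "wm (alt s t 6) (E s t l 0 0) = wm (alt t s 6) (E s t l 0 0)"
      using assms apply (simp add: alt_nums sr_E1 sr_E2 algebra_simps)
      apply (rule E_eq; linarith)?
      done
    then show "wm (alt s t 6) l = wm (alt t s 6) l" by (simp add: E_0)
  qed
  show "\<forall>k<6. \<exists>x y. 0 \<le> x \<and> 0 \<le> y \<and> wm (alt s t k) (gm s) = E s t 0 x y"
    unfolding gm_E[of s t] using assms
    by (simp add: all_lt_num alt_nums sr_E1 sr_E2 algebra_simps E_exI)
qed

lemma rk2_case5:
  assumes "s \<in> R" "t \<in> R" "A s t = -3" "A t s = -1"
  shows "wm (alt s t 6) = wm (alt t s 6) \<and> (\<forall>k<6. \<exists>x y. 0 \<le> x \<and> 0 \<le> y \<and> wm (alt s t k) (gm s) = E s t 0 x y)"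
proof
  show "wm (alt s t 6) = wm (alt t s 6)"
  proof
    fix l
    have "wm (alt s t 6) (E s t l 0 0) = wm (alt t s 6) (E s t l 0 0)"
      using assms apply (simp add: alt_nums sr_E1 sr_E2 algebra_simps)
      apply (rule E_eq; linarith)?
      done
    then show "wm (alt s t 6) l = wm (alt t s 6) l" by (simp add: E_0)
  qed
  show "\<forall>k<6. \<exists>x y. 0 \<le> x \<and> 0 \<le> y \<and> wm (alt s t k) (gm s) = E s t 0 x y"
    unfolding gm_E[of s t] using assms
    by (simp add: all_lt_num alt_nums sr_E1 sr_E2 algebra_simps E_exI)
qed

end


lemma alt_char:
  assumes "s \<noteq> t" "set ws \<subseteq> {s, t}" "\<not> (\<exists>xs a ys. ws = xs @ a # a # ys)" "ws = [] \<or> last ws = t"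
  shows "ws = alt s t (length ws)"
  using assms(2-4)
proof (induction ws)
  case Nil then show ?case by simp
next
  case (Cons a ws')
  show ?case
  proof (cases "ws' = []")
    case True then show ?thesis using Cons.prems by simp
  next
    case False
    have nd: "\<not> (\<exists>xs a ys. ws' = xs @ a # a # ys)"
    proof
      assume "\<exists>xs b ys. ws' = xs @ b # b # ys"
      then obtain xs b ys where "ws' = xs @ b # b # ys" by auto
      then have "a # ws' = (a # xs) @ b # b # ys" by simp
      then show False using Cons.prems by blast
    qed
    have "ws' = alt s t (length ws')" using Cons.IH Cons.prems nd False by auto
    then obtain n where n: "length ws' = Suc n" "ws' = (if even n then t else s) # alt s t n"
      using False by (cases "length ws'") auto
    have "a \<noteq> (if even n then t else s)"
    proof
      assume "a = (if even n then t else s)"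
      then have "a # ws' = [] @ a # a # alt s t n" using n by simp
      then show False using Cons.prems by blast
    qed
    then have "a = (if even (Suc n) then t else s)" using Cons.prems(1) assms(1) by auto
    then show ?thesis using n by simp
  qed
qed

context RD
begin

lemma rank2:
  assumes s: "s \<in> R" and t: "t \<in> R" and st: "s \<noteq> t"
  shows "\<exists>m::nat. m \<ge> 1 \<and> wm (alt s t m) = wm (alt t s m) \<and>
     (\<forall>k<m. \<exists>x y::int. 0 \<le> x \<and> 0 \<le> y \<and> wm (alt s t k) (gm s) = E s t 0 x y)"
proof -
  have "A s t \<le> 0" "A t s \<le> 0" "A s t * A t s \<le> 3" "A s t = 0 \<longleftrightarrow> A t s = 0"
    using Aij[OF s t st] Aij[OF t s] st ab_bound[OF s t st] Aij0[OF s t] by auto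
  from ab_cases[OF this] show ?thesis
  proof (elim disjE conjE)
    assume "A s t = 0" "A t s = 0" then show ?thesis using rk2_case0[OF s t] by (intro exI[of _ "2::nat"]) auto
  next
    assume "A s t = -1" "A t s = -1" then show ?thesis using rk2_case1[OF s t] by (intro exI[of _ "3::nat"]) auto
  next
    assume "A s t = -1" "A t s = -2" then show ?thesis using rk2_case2[OF s t] by (intro exI[of _ "4::nat"]) auto
  next
    assume "A s t = -2" "A t s = -1" then show ?thesis using rk2_case3[OF s t] by (intro exI[of _ "4::nat"]) auto
  next
    assume "A s t = -1" "A t s = -3" then show ?thesis using rk2_case4[OF s t] by (intro exI[of _ "6::nat"]) auto
  next
    assume "A s t = -3" "A t s = -1" then show ?thesis using rk2_case5[OF s t] by (intro exI[of _ "6::nat"]) auto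
  qed
qed

end


context RD
begin

lemma wm_snoc_cancel: "a \<in> R \<Longrightarrow> wm (xs @ [a]) \<circ> sr a = wm xs"
  by (auto simp: fun_eq_iff word_map_append)

lemma dihedral:
  assumes s: "s \<in> R" and t: "t \<in> R" and st: "s \<noteq> t"
    and g: "gen {s, t} v" and le: "wl {s, t} v \<le> wl {s, t} (v \<circ> sr s)"
  shows "\<exists>x y::int. 0 \<le> x \<and> 0 \<le> y \<and> v (gm s) = E s t 0 x y"
proof -
  let ?I = "{s, t}"
  have IR: "?I \<subseteq> R" using s t by auto
  obtain ws where ws: "set ws \<subseteq> ?I" "wm ws = v" "length ws = wl ?I v" using wl_ex[OF g] by blast
  define k where "k = length ws"
  have nd: "\<not> (\<exists>xs a ys. ws = xs @ a # a # ys)"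
  proof
    assume "\<exists>xs a ys. ws = xs @ a # a # ys"
    then obtain xs a ys where e: "ws = xs @ a # a # ys" by auto
    then have a: "a \<in> R" using ws IR by auto
    have "wm ws = wm (xs @ ys)" unfolding e using a
      by (simp add: word_map_append fun_eq_iff)
    then have "wl ?I v \<le> length (xs @ ys)" using wl_le[of "xs @ ys" ?I] ws e by auto
    then show False using ws e by simp
  qed
  have lt: "ws = [] \<or> last ws = t"
  proof (rule ccontr)
    assume "\<not> (ws = [] \<or> last ws = t)"
    then have "ws \<noteq> []" "last ws = s" using ws by (auto dest: last_in_set)
    then obtain ws' where e: "ws = ws' @ [s]" by (metis append_butlast_last_id)
    have "v \<circ> sr s = wm (ws' @ [s]) \<circ> sr s" using ws e by simp
    also have "\<dots> = wm ws'" by (rule wm_snoc_cancel[OF s])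
    finally have "v \<circ> sr s = wm ws'" .
    then have "wl ?I (v \<circ> sr s) \<le> length ws'" using wl_le[of ws' ?I] ws e by auto
    then show False using le ws e by simp
  qed
  have wsalt: "ws = alt s t k" using alt_char[OF st ws(1) nd lt] k_def by simp
  obtain m where m: "m \<ge> 1" "wm (alt s t m) = wm (alt t s m)"
      "\<forall>k<m. \<exists>x y::int. 0 \<le> x \<and> 0 \<le> y \<and> wm (alt s t k) (gm s) = E s t 0 x y"
    using rank2[OF s t st] by blast
  have "k < m"
  proof (rule ccontr)
    assume "\<not> k < m"
    then obtain pre where pre: "alt s t k = pre @ alt s t m" using alt_prefix[of m k] by auto
    obtain pre2 where pre2: "alt t s m = pre2 @ [s]" using alt_last[OF m(1)] by auto
    have "v = wm pre \<circ> wm (alt t s m)" using ws wsalt pre m(2) by (simp add: word_map_append)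
    then have veq: "v = wm ((pre @ pre2) @ [s])" using pre2 by (simp add: word_map_append)
    have "v \<circ> sr s = wm (pre @ pre2)" by (subst veq) (rule wm_snoc_cancel[OF s])
    moreover have "set (pre @ pre2) \<subseteq> ?I"
    proof -
      have "set pre \<subseteq> ?I" using pre alt_set[of s t k] by auto
      moreover have "set pre2 \<subseteq> ?I" using pre2 alt_set[of t s m] by auto
      ultimately show ?thesis by auto
    qed
    ultimately have "wl ?I (v \<circ> sr s) \<le> length (pre @ pre2)" using wl_le by metis
    moreover have "length (pre @ pre2) + 1 = k"
    proof -
      have "k = length pre + m" using arg_cong[OF pre, of length] by simp
      moreover have "m = length pre2 + 1" using arg_cong[OF pre2, of length] by simp
      ultimately show ?thesis by simp
    qed
    ultimately show False using le ws k_def by simp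
  qed
  then show ?thesis using m(3) ws(2) wsalt by auto
qed

lemma E_lin: "w \<in> W \<Longrightarrow> w (E s t 0 x y) = smul x (w (gm s)) + smul y (w (gm t))"
proof -
  assume w: "w \<in> W"
  have "E s t 0 x y = smul x (gm s) + smul y (gm t)" by (simp add: E_def fun_eq_iff)
  then show ?thesis by (simp only: lin_add[OF W_lin[OF w]] lin_smul[OF W_lin[OF w]])
qed

theorem dich: "w \<in> W \<Longrightarrow> s \<in> R \<Longrightarrow> len w \<le> len (w \<circ> sr s) \<Longrightarrow> Qp (w (gm s))"
proof (induction "len w" arbitrary: w s rule: less_induct)
  case less
  note w = less.prems(1) and s = less.prems(2) and le = less.prems(3)
  show ?case
  proof (cases "len w = 0")
    case True
    then have "w = id" using len_0 w by auto
    then show ?thesis using Qp_gm s by simp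
  next
    case False
    then obtain t w1 where t: "t \<in> R" "w1 \<in> W" "w = w1 \<circ> sr t" "len w1 + 1 = len w"
      using last_letter[OF w] by auto
    have wt: "w \<circ> sr t = w1" using t sr_cancel_right[OF t(1)] by simp
    have st: "s \<noteq> t" using le wt t by auto
    define I where "I = {s, t}"
    have IR: "I \<subseteq> R" using s t I_def by auto
    define P where "P = (\<lambda>v. v \<in> W \<and> (\<exists>u. gen I u \<and> v \<circ> u = w \<and> len v + wl I u = len w))"
    have Pw1: "P w1"
    proof -
      have "wl I (sr t) \<le> 1" using wl_sref[of t I] I_def by auto
      moreover have "wl I (sr t) \<noteq> 0"
      proof
        assume "wl I (sr t) = 0"
        then have "sr t = id" using wl_0[of I "sr t"] gen_sref[of t I] I_def by auto
        then show False using sref_i[OF t(1), of "gm t"] gm_ii[OF t(1)] by simp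
      qed
      ultimately have "wl I (sr t) = 1" by simp
      then show ?thesis unfolding P_def using t gen_sref[of t I] I_def by auto
    qed
    obtain v where Pv: "P v" and vmin: "\<And>v'. P v' \<Longrightarrow> len v \<le> len v'"
    proof -
      have "\<exists>n. \<exists>v. P v \<and> len v = n" using Pw1 by auto
      from ex_has_least_nat[of "\<lambda>v. P v" w1 len] Pw1 obtain v where
        "P v" "\<And>v'. P v' \<Longrightarrow> len v \<le> len v'" by metis
      then show ?thesis using that by blast
    qed
    obtain u where v: "v \<in> W" "gen I u" "v \<circ> u = w" "len v + wl I u = len w" using Pv P_def by auto
    have uW: "u \<in> W" using v(2) IR gen_sub gen_W by blast
    have lenv: "len v < len w" using vmin[OF Pw1] t by simp
    have tri: "len (v' \<circ> u') \<le> len v' + wl I u'" if "v' \<in> W" "gen I u'" for v' u'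
    proof -
      have "len (v' \<circ> u') \<le> len v' + len u'" using len_comp[of v' u'] that gen_sub[OF IR] gen_W by auto
      moreover have "len u' \<le> wl I u'" using wl_mono[OF IR that(2)] .
      ultimately show ?thesis by simp
    qed
    have vx: "len v \<le> len (v \<circ> sr x)" if x: "x \<in> I" for x
    proof (rule ccontr)
      assume "\<not> len v \<le> len (v \<circ> sr x)"
      then have lt: "len (v \<circ> sr x) < len v" by simp
      have xR: "x \<in> R" using x IR by auto
      have g': "gen I (sr x \<circ> u)" using gen_comp[OF gen_sref[OF x] v(2)] .
      have vW: "v \<circ> sr x \<in> W" using W_comp[OF v(1) sref_W[OF xR]] .
      have "(v \<circ> sr x) \<circ> (sr x \<circ> u) = v \<circ> (sr x \<circ> (sr x \<circ> u))" by (simp only: o_assoc)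
      also have "\<dots> = v \<circ> u" by (simp only: sr_cancel_left[OF xR])
      finally have eq: "(v \<circ> sr x) \<circ> (sr x \<circ> u) = w" using v(3) by simp
      have "wl I (sr x \<circ> u) \<le> wl I (sr x) + wl I u" using wl_comp[OF gen_sref[OF x] v(2)] .
      then have "wl I (sr x \<circ> u) \<le> wl I u + 1" using wl_sref[OF x] by simp
      then have "len (v \<circ> sr x) + wl I (sr x \<circ> u) \<le> len w" using lt v(4) by simp
      moreover have "len w \<le> len (v \<circ> sr x) + wl I (sr x \<circ> u)" using tri[OF vW g'] eq by simp
      ultimately have "P (v \<circ> sr x)" unfolding P_def using vW g' eq by auto
      then show False using vmin lt by fastforce
    qed
    have Qs: "Qp (v (gm s))" using less.hyps[OF lenv v(1) s vx[of s]] I_def by auto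
    have Qt: "Qp (v (gm t))" using less.hyps[OF lenv v(1) t(1) vx[of t]] I_def by auto
    have ule: "wl I u \<le> wl I (u \<circ> sr s)"
    proof (rule ccontr)
      assume "\<not> wl I u \<le> wl I (u \<circ> sr s)"
      then have lt: "wl I (u \<circ> sr s) < wl I u" by simp
      have "w \<circ> sr s = v \<circ> (u \<circ> sr s)" using v(3) by (simp add: o_assoc)
      moreover have "gen I (u \<circ> sr s)" using gen_comp[OF v(2) gen_sref] I_def by auto
      ultimately have "len (w \<circ> sr s) \<le> len v + wl I (u \<circ> sr s)" using tri[OF v(1)] by metis
      then show False using lt v(4) le by simp
    qed
    obtain x y where xy: "0 \<le> x" "0 \<le> y" "u (gm s) = E s t 0 x y"
      using dihedral[OF s t(1) st] v(2) ule I_def by blast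
    have "w (gm s) = v (E s t 0 x y)" using v(3) xy by auto
    also have "\<dots> = smul x (v (gm s)) + smul y (v (gm t))" using E_lin v(1) by blast
    finally show ?thesis using Qs Qt xy Qp_add Qp_smul by (metis nonneg_int_cases)
  qed
qed

end


context RD
begin

lemma descents_iff: "i \<in> descents A r w \<longleftrightarrow> i \<in> R \<and> len (w \<circ> sr i) < len w"
  unfolding descents_def wlen_wl by auto

lemma sr_form: "sr i x = x - smul (x i) (gm i)"
  by (simp add: fun_eq_iff sref_apply)

lemma W_neg: "w \<in> W \<Longrightarrow> w (- x) = - w x" using W_lin lin_neg by blast

lemma dich_neg: "w \<in> W \<Longrightarrow> s \<in> R \<Longrightarrow> len (w \<circ> sr s) < len w \<Longrightarrow> Qp (- w (gm s))"
proof -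
  assume w: "w \<in> W" and s: "s \<in> R" and lt: "len (w \<circ> sr s) < len w"
  have w': "w \<circ> sr s \<in> W" using W_comp w sref_W s by auto
  have "len (w \<circ> sr s) \<le> len ((w \<circ> sr s) \<circ> sr s)" using lt by (simp add: sr_cancel_right[OF s])
  then have "Qp ((w \<circ> sr s) (gm s))" using dich[OF w' s] by blast
  then show ?thesis using sref_gm[OF s] W_neg[OF w] by simp
qed

lemma W_nonzero: "w \<in> W \<Longrightarrow> x \<noteq> 0 \<Longrightarrow> w x \<noteq> 0"
  using W_inj lin_zero W_lin by metis

lemma dich_iff: "w \<in> W \<Longrightarrow> s \<in> R \<Longrightarrow> Qp (w (gm s)) \<longleftrightarrow> len w \<le> len (w \<circ> sr s)"
proof
  assume w: "w \<in> W" and s: "s \<in> R" and q: "Qp (w (gm s))"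
  show "len w \<le> len (w \<circ> sr s)"
  proof (rule ccontr)
    assume "\<not> len w \<le> len (w \<circ> sr s)"
    then have "Qp (- w (gm s))" using dich_neg w s by simp
    then have "w (gm s) = 0" using Qp_antisym q by simp
    then show False using W_nonzero[OF w gm_nonzero[OF s]] by simp
  qed
qed (rule dich)

lemma inv_comp: "u \<in> W \<Longrightarrow> v \<in> W \<Longrightarrow> inv (u \<circ> v) = inv v \<circ> inv u"
proof -
  assume u: "u \<in> W" and v: "v \<in> W"
  have "(inv v \<circ> inv u) \<circ> (u \<circ> v) = id" using W_inv[OF u] W_inv[OF v]
    by (simp add: fun_eq_iff W_inv_l u v)
  moreover have "(u \<circ> v) \<circ> (inv v \<circ> inv u) = id" using W_inv[OF u] W_inv[OF v]
    by (simp add: fun_eq_iff W_inv_r u v)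
  ultimately show ?thesis by (metis inv_unique_comp)
qed

lemma inv_sr: "i \<in> R \<Longrightarrow> inv (sr i) = sr i"
  using sref_invol_comp by (metis inv_unique_comp)

lemma dich_left: "w \<in> W \<Longrightarrow> i \<in> R \<Longrightarrow> len w \<le> len (sr i \<circ> w) \<Longrightarrow> Qp (inv w (gm i))"
proof -
  assume w: "w \<in> W" and i: "i \<in> R" and le: "len w \<le> len (sr i \<circ> w)"
  have "inv (sr i \<circ> w) = inv w \<circ> sr i" using inv_comp[OF sref_W[OF i] w] inv_sr[OF i] by simp
  then have "len (inv w) \<le> len (inv w \<circ> sr i)" using le len_inv[OF w] len_inv[of "sr i \<circ> w"] W_comp[OF sref_W[OF i] w]
    by simp
  then show ?thesis using dich[OF W_inv_in[OF w] i] by blast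
qed

lemma coord_B: "i \<in> R \<Longrightarrow> x i * gn i = 2 * B x (gm i)"
  using B_key by (simp add: gn_def)

lemma dominant_B: "dominant r d \<Longrightarrow> Qp v \<Longrightarrow> B d v \<ge> 0"
proof -
  assume d: "dominant r d" and "Qp v"
  then obtain n where n: "v = comb n" unfolding Qp_def by auto
  have "(\<Sum>j\<in>R. int (n j) * d j * gn j) \<ge> 0"
    using d gn_pos unfolding dominant_def by (intro sum_nonneg) (simp add: order.strict_implies_order)
  then show ?thesis using B_comb[of d n] n by simp
qed

lemma sref_lattice: "in_lattice r x \<Longrightarrow> in_lattice r (sr i x)"
  unfolding in_lattice_def by (simp add: sref_apply gm_apply)

lemma W_lattice: "w \<in> W \<Longrightarrow> in_lattice r x \<Longrightarrow> in_lattice r (w x)"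
proof (induction rule: weyl.induct)
  case weyl_id then show ?case by simp
next
  case (weyl_step i w) then show ?case using sref_lattice by simp
qed

lemma Qp_add_smul: "Qp a \<Longrightarrow> Qp v \<Longrightarrow> c \<ge> 0 \<Longrightarrow> Qp (a + smul c v)"
  using Qp_add Qp_smul by (metis nonneg_int_cases)

lemma D1: "dominant r d \<Longrightarrow> v \<in> W \<Longrightarrow> Qp (d - v d)"
proof (induction "len v" arbitrary: v rule: less_induct)
  case less
  note d = less.prems(1) and v = less.prems(2)
  show ?case
  proof (cases "len v = 0")
    case True then have "v = id" using len_0 v by blast
    then show ?thesis using Qp_0 by simp
  next
    case False
    then obtain i v' where iv: "i \<in> R" "v' \<in> W" "v = sr i \<circ> v'" "len v' + 1 = len v"
      using first_letter[OF v] by auto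
    have IH: "Qp (d - v' d)" using less.hyps[of v'] iv d by simp
    have "len v' \<le> len (sr i \<circ> v')" using iv by simp
    then have q: "Qp (inv v' (gm i))" using dich_left iv by blast
    have "v' d i * gn i = 2 * B (v' d) (gm i)" using coord_B iv by simp
    also have "\<dots> = 2 * B (inv v' (v' d)) (inv v' (gm i))" using B_inv[OF W_inv_in[OF iv(2)]] by simp
    also have "\<dots> = 2 * B d (inv v' (gm i))" using W_inv_l[OF iv(2)] by simp
    finally have "v' d i * gn i \<ge> 0" using dominant_B[OF d q] by simp
    then have c: "v' d i \<ge> 0" using gn_pos[OF iv(1)] by (simp add: zero_le_mult_iff)
    have e: "d - v d = (d - v' d) + smul (v' d i) (gm i)" using iv(3) by (simp add: sref_apply fun_eq_iff)
    show ?thesis unfolding e by (rule Qp_add_smul[OF IH Qp_gm[OF iv(1)] c])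
  qed
qed

lemma dom_unique: "dominant r d1 \<Longrightarrow> dominant r d2 \<Longrightarrow> v \<in> W \<Longrightarrow> v d1 = d2 \<Longrightarrow> d1 = d2"
proof -
  assume d1: "dominant r d1" and d2: "dominant r d2" and v: "v \<in> W" and e: "v d1 = d2"
  have "Qp (d1 - d2)" using D1[OF d1 v] e by simp
  moreover have "Qp (d2 - inv v d2)" using D1[OF d2 W_inv_in[OF v]] .
  then have "Qp (- (d1 - d2))" using W_inv_l[OF v] e by (metis minus_diff_eq)
  ultimately have "d1 - d2 = 0" using Qp_antisym by blast
  then show ?thesis by simp
qed

lemma dom_exists: "in_lattice r x \<Longrightarrow> \<exists>u\<in>W. dominant r (u x)"
proof -
  assume x: "in_lattice r x"
  define f where "f = (\<lambda>u. B (u x) rho)"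
  have ne: "W \<noteq> {}" using weyl.intros by blast
  define M where "M = Max (f ` W)"
  have "M \<in> f ` W" unfolding M_def using finW ne by (intro Max_in) auto
  then obtain u0 where u0: "u0 \<in> W" "f u0 = M" by auto
  have mx: "f u \<le> f u0" if "u \<in> W" for u unfolding u0(2) M_def using finW that by (intro Max_ge) auto
  have "dominant r (u0 x)"
    unfolding dominant_def
  proof (intro conjI ballI)
    show "in_lattice r (u0 x)" using W_lattice u0 x by simp
    fix j assume j: "j \<in> R"
    show "0 \<le> u0 x j"
    proof (rule ccontr)
      assume neg: "\<not> 0 \<le> u0 x j"
      have u1: "sr j \<circ> u0 \<in> W" using W_comp sref_W j u0 by blast
      have "f (sr j \<circ> u0) = B (u0 x - smul (u0 x j) (gm j)) rho" unfolding f_def by (simp add: sr_form)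
      also have "\<dots> = f u0 - u0 x j * B (gm j) rho" unfolding f_def by (simp add: B_diff_left B_smul_left)
      finally have e: "f (sr j \<circ> u0) = f u0 - u0 x j * B (gm j) rho" .
      have "2 * B rho (gm j) = gn j" using coord_B[OF j, of rho] j by (simp add: rho_def)
      then have "B (gm j) rho > 0" using gn_pos[OF j] B_sym by simp
      then have "u0 x j * B (gm j) rho < 0" using neg by (simp add: mult_neg_pos)
      then have "f (sr j \<circ> u0) > f u0" using e by simp
      then show False using mx[OF u1] by simp
    qed
  qed
  then show ?thesis using u0 by blast
qed

lemma dom_rep: "in_lattice r x \<Longrightarrow> dominant r (dom_rep A r x) \<and> (\<exists>u\<in>W. u x = dom_rep A r x)"
proof -
  assume x: "in_lattice r x"
  obtain u where u: "u \<in> W" "dominant r (u x)" using dom_exists[OF x] by blast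
  have "\<exists>!mu. dominant r mu \<and> (\<exists>w\<in>W. w x = mu)"
  proof (rule ex1I[of _ "u x"])
    show "dominant r (u x) \<and> (\<exists>w\<in>W. w x = u x)" using u by blast
    fix mu assume "dominant r mu \<and> (\<exists>w\<in>W. w x = mu)"
    then obtain w where w: "w \<in> W" "w x = mu" "dominant r mu" by blast
    have "(w \<circ> inv u) (u x) = mu" using W_inv_l[OF u(1)] w by simp
    moreover have "w \<circ> inv u \<in> W" using W_comp w(1) W_inv_in u(1) by blast
    ultimately show "mu = u x" using dom_unique[OF u(2) w(3)] by metis
  qed
  then show ?thesis unfolding dom_rep_def by (rule theI')
qed

end


abbreviation lk :: "(wt \<Rightarrow>\<^sub>0 int) \<Rightarrow> wt \<Rightarrow> int" where "lk \<equiv> Poly_Mapping.lookup"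
abbreviation ks :: "(wt \<Rightarrow>\<^sub>0 int) \<Rightarrow> wt set" where "ks \<equiv> Poly_Mapping.keys"

abbreviation e :: "wt \<Rightarrow> (wt \<Rightarrow>\<^sub>0 int)" where "e mu \<equiv> Poly_Mapping.single mu 1"

lemma lookup_single_mult: "lk (Poly_Mapping.single a 1 * h) v = lk h (v - (a::wt))"
proof -
  have "lk (Poly_Mapping.single a 1 * h) v = (\<Sum>l. (1 when a = l) * (\<Sum>q. lk h q when v = l + q))"
    by (simp only: lookup_mult lookup_single)
  also have "\<dots> = (\<Sum>l. (\<Sum>q. lk h q when v = l + q) when l = a)"
    by (rule Sum_any.cong) (simp add: when_def)
  also have "\<dots> = (\<Sum>q. lk h q when v = a + q)" by (rule Sum_any_when_equal)
  also have "\<dots> = (\<Sum>q. lk h q when q = v - a)"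
    by (rule Sum_any.cong) (auto simp: when_def)
  also have "\<dots> = lk h (v - a)" by (rule Sum_any_when_equal)
  finally show ?thesis .
qed

lemma e_eq_iff: "e a = e b \<longleftrightarrow> a = b"
proof
  assume "e a = e b"
  then have "lk (e a) a = lk (e b) a" by simp
  then show "a = b" by (simp add: lookup_single when_def split: if_splits)
qed simp

lemma pm_decomp: "f = (\<Sum>v\<in>ks f. Poly_Mapping.single v (lk f v))"
proof (rule poly_mapping_eqI)
  fix x
  show "lk f x = lk (\<Sum>v\<in>ks f. Poly_Mapping.single v (lk f v)) x"
    by (simp add: lookup_sum lookup_single when_def in_keys_iff)
qed

lemma single_scale: "Poly_Mapping.single v (c::int) = Poly_Mapping.single 0 c * e v"
  by (simp add: mult_single)

lemma keys_sum_sub: "ks (\<Sum>v\<in>S. (g v :: wt \<Rightarrow>\<^sub>0 int)) \<subseteq> (\<Union>v\<in>S. ks (g v))"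
proof (induction S rule: infinite_finite_induct)
  case (insert x F) then show ?case using keys_add[of "g x" "sum g F"] by auto
qed auto

lemma keys_scale: "ks (Poly_Mapping.single 0 (c::int) * p) \<subseteq> ks (p :: wt \<Rightarrow>\<^sub>0 int)"
  using keys_mult[of "Poly_Mapping.single 0 c" p] by (auto split: if_splits)

lemma keys_diff_sub: "ks ((f::wt \<Rightarrow>\<^sub>0 int) - g) \<subseteq> ks f \<union> ks g"
  by (auto simp: in_keys_iff lookup_minus)

context RD
begin

lemma cancel_factor:
  assumes i: "i \<in> R" and h: "(1 - e (- gm i)) * h = 0"
  shows "h = 0"
proof (rule ccontr)
  assume nz: "h \<noteq> 0"
  then have ne: "ks h \<noteq> {}" by simp
  define M where "M = Max ((\<lambda>v. v i) ` ks h)"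
  have "M \<in> (\<lambda>v. v i) ` ks h" unfolding M_def using ne by (intro Max_in) auto
  then obtain v where v: "v \<in> ks h" "v i = M" by auto
  have mx: "u \<in> ks h \<Longrightarrow> u i \<le> M" for u unfolding M_def by (intro Max_ge) auto
  have "(1 - e (- gm i)) * h = h - e (- gm i) * h" by (simp add: left_diff_distrib)
  then have "lk ((1 - e (- gm i)) * h) v = lk h v - lk h (v - (- gm i))"
    by (simp only: lookup_minus lookup_single_mult)
  moreover have "v - (- gm i) \<notin> ks h"
  proof
    assume "v - (- gm i) \<in> ks h"
    then have "(v - (- gm i)) i \<le> M" using mx by blast
    then show False using v gm_ii[OF i] by simp
  qed
  ultimately have "lk h v = 0" using h by (simp add: in_keys_iff)
  then show False using v by (simp add: in_keys_iff)
qed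

lemma demazure_char:
  assumes i: "i \<in> R" and G: "(1 - e (- gm i)) * G = f - e (- gm i) * sact A r i f"
  shows "demazure A r i f = G"
  unfolding demazure_def
proof (rule the_equality)
  show "(1 - e (- gm i)) * G = f - e (- gm i) * sact A r i f" by (rule G)
  fix g assume "(1 - e (- gm i)) * g = f - e (- gm i) * sact A r i f"
  then have "(1 - e (- gm i)) * (g - G) = 0" using G by (simp add: right_diff_distrib)
  then have "g - G = 0" by (rule cancel_factor[OF i])
  then show "g = G" by simp
qed

lemma lookup_sact: "i \<in> R \<Longrightarrow> lk (sact A r i f) v = lk f (sr i v)"
proof -
  assume i: "i \<in> R"
  have "{v. lk f (sr i v) \<noteq> 0} \<subseteq> sr i ` ks f"
  proof
    fix v assume "v \<in> {v. lk f (sr i v) \<noteq> 0}"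
    then have "sr i v \<in> ks f" by (simp add: in_keys_iff)
    then show "v \<in> sr i ` ks f" using sref_invol[OF i, of v] by (metis image_eqI)
  qed
  then have "finite {v. lk f (sr i v) \<noteq> 0}" by (rule finite_subset) auto
  then show ?thesis unfolding sact_def by simp
qed

lemma sact_add: "i \<in> R \<Longrightarrow> sact A r i (f + g) = sact A r i f + sact A r i g"
  by (rule poly_mapping_eqI) (simp add: lookup_sact lookup_add)

lemma sact_single: "i \<in> R \<Longrightarrow> sact A r i (Poly_Mapping.single v c) = Poly_Mapping.single (sr i v) c"
proof (rule poly_mapping_eqI)
  fix x assume i: "i \<in> R"
  have eq: "(v = sr i x) \<longleftrightarrow> (sr i v = x)" using sref_invol[OF i] by metis
  show "lk (sact A r i (Poly_Mapping.single v c)) x = lk (Poly_Mapping.single (sr i v) c) x"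
    unfolding lookup_sact[OF i] lookup_single when_def using eq by simp
qed

lemma sact_sum: "i \<in> R \<Longrightarrow> sact A r i (\<Sum>v\<in>S. g v) = (\<Sum>v\<in>S. sact A r i (g v))"
proof (induction S rule: infinite_finite_induct)
  case (infinite S)
  have "sact A r i 0 = 0" by (rule poly_mapping_eqI) (simp add: lookup_sact[OF infinite(2)])
  then show ?case using infinite by simp
next
  case empty
  have "sact A r i 0 = 0" by (rule poly_mapping_eqI) (simp add: lookup_sact[OF empty])
  then show ?case by simp
next
  case (insert x F) then show ?case by (simp add: sact_add)
qed

definition dm :: "nat \<Rightarrow> wt \<Rightarrow> (wt \<Rightarrow>\<^sub>0 int)" where
  "dm i v = (if v i \<ge> 0 then (\<Sum>k<Suc (nat (v i)). e (v - smul (int k) (gm i)))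
            else - (\<Sum>k<nat (- v i) - 1. e (v + smul (int (Suc k)) (gm i))))"

lemma dm_eq: assumes i: "i \<in> R"
  shows "(1 - e (- gm i)) * dm i v = e v - e (- gm i) * e (sr i v)"
proof (cases "v i \<ge> 0")
  case True
  define m where "m = nat (v i)"
  have vi: "v i = int m" using True m_def by simp
  define F where "F = (\<lambda>k::nat. e (v - smul (int k) (gm i)))"
  have shift: "e (- gm i) * F k = F (Suc k)" for k
    unfolding F_def by (simp add: mult_single e_eq_iff fun_eq_iff algebra_simps)
  have "(1 - e (- gm i)) * dm i v = (\<Sum>k<Suc m. F k) - e (- gm i) * (\<Sum>k<Suc m. F k)"
    using True unfolding dm_def F_def m_def by (simp add: left_diff_distrib)
  also have "e (- gm i) * (\<Sum>k<Suc m. F k) = (\<Sum>k<Suc m. F (Suc k))"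
    by (simp only: sum_distrib_left shift)
  also have "(\<Sum>k<Suc m. F k) - (\<Sum>k<Suc m. F (Suc k)) = (\<Sum>k<Suc m. F k - F (Suc k))"
    by (simp only: sum_subtractf)
  also have "\<dots> = F 0 - F (Suc m)" by (rule sum_lessThan_telescope')
  also have "F 0 = e v" unfolding F_def by (simp add: smul_0)
  also have "F (Suc m) = e (- gm i) * e (sr i v)"
    unfolding F_def by (simp add: mult_single e_eq_iff sr_form vi fun_eq_iff algebra_simps)
  finally show ?thesis .
next
  case False
  define n where "n = nat (- v i)"
  have vi: "v i = - int n" "n \<ge> 1" using False n_def by auto
  define H where "H = (\<lambda>k::nat. e (v + smul (int k) (gm i)))"
  have shift: "e (- gm i) * H (Suc k) = H k" for k
    unfolding H_def by (simp add: mult_single e_eq_iff fun_eq_iff algebra_simps)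
  have "(1 - e (- gm i)) * dm i v = - (\<Sum>k<n - 1. H (Suc k)) + e (- gm i) * (\<Sum>k<n - 1. H (Suc k))"
    using False unfolding dm_def H_def n_def by (simp add: left_diff_distrib)
  also have "e (- gm i) * (\<Sum>k<n - 1. H (Suc k)) = (\<Sum>k<n - 1. H k)"
    by (simp only: sum_distrib_left shift)
  also have "- (\<Sum>k<n - 1. H (Suc k)) + (\<Sum>k<n - 1. H k) = (\<Sum>k<n - 1. H k - H (Suc k))"
  proof -
    have "- (\<Sum>k<n - 1. H (Suc k)) + (\<Sum>k<n - 1. H k) = (\<Sum>k<n - 1. H k) - (\<Sum>k<n - 1. H (Suc k))"
      by simp
    then show ?thesis by (simp only: sum_subtractf)
  qed
  also have "\<dots> = H 0 - H (n - 1)" by (rule sum_lessThan_telescope')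
  also have "H 0 = e v" unfolding H_def by (simp add: smul_0)
  also have "H (n - 1) = e (- gm i) * e (sr i v)"
    unfolding H_def using vi by (simp add: mult_single e_eq_iff sr_form fun_eq_iff algebra_simps of_nat_diff)
  finally show ?thesis .
qed

definition Dgen :: "nat \<Rightarrow> (wt \<Rightarrow>\<^sub>0 int) \<Rightarrow> (wt \<Rightarrow>\<^sub>0 int)" where
  "Dgen i f = (\<Sum>v\<in>ks f. Poly_Mapping.single 0 (lk f v) * dm i v)"

lemma Dgen_eq: assumes i: "i \<in> R"
  shows "(1 - e (- gm i)) * Dgen i f = f - e (- gm i) * sact A r i f"
proof -
  define c where "c = (\<lambda>v. Poly_Mapping.single 0 (lk f v) :: wt \<Rightarrow>\<^sub>0 int)"
  define g where "g = e (- gm i)"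
  have "(1 - g) * Dgen i f = (\<Sum>v\<in>ks f. (1 - g) * (c v * dm i v))"
    unfolding Dgen_def c_def by (rule sum_distrib_left)
  also have "\<dots> = (\<Sum>v\<in>ks f. c v * e v - g * (c v * e (sr i v)))"
  proof (rule sum.cong)
    fix v
    have "(1 - g) * (c v * dm i v) = c v * ((1 - g) * dm i v)" by (rule mult.left_commute)
    also have "\<dots> = c v * (e v - g * e (sr i v))" using dm_eq[OF i] g_def by simp
    also have "\<dots> = c v * e v - g * (c v * e (sr i v))" by (simp only: right_diff_distrib mult.left_commute)
    finally show "(1 - g) * (c v * dm i v) = c v * e v - g * (c v * e (sr i v))" .
  qed simp
  also have "\<dots> = (\<Sum>v\<in>ks f. c v * e v) - g * (\<Sum>v\<in>ks f. c v * e (sr i v))"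
    by (simp only: sum_subtractf sum_distrib_left)
  also have "(\<Sum>v\<in>ks f. c v * e v) = f"
  proof -
    have "(\<Sum>v\<in>ks f. c v * e v) = (\<Sum>v\<in>ks f. Poly_Mapping.single v (lk f v))"
      unfolding c_def by (rule sum.cong) (simp_all only: single_scale[symmetric])
    then show ?thesis using pm_decomp[of f] by simp
  qed
  also have "(\<Sum>v\<in>ks f. c v * e (sr i v)) = sact A r i f"
  proof -
    have "sact A r i f = (\<Sum>v\<in>ks f. sact A r i (Poly_Mapping.single v (lk f v)))"
      using sact_sum[OF i] pm_decomp[of f] by metis
    also have "\<dots> = (\<Sum>v\<in>ks f. c v * e (sr i v))"
      unfolding c_def by (rule sum.cong) (simp_all only: sact_single[OF i] single_scale[symmetric])
    finally show ?thesis by simp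
  qed
  finally show ?thesis unfolding g_def .
qed

lemma demazure_Dgen: "i \<in> R \<Longrightarrow> demazure A r i f = Dgen i f"
  using demazure_char Dgen_eq by blast

lemma demazure_add: "i \<in> R \<Longrightarrow> demazure A r i (f + g) = demazure A r i f + demazure A r i g"
proof -
  assume i: "i \<in> R"
  have "(1 - e (- gm i)) * (Dgen i f + Dgen i g) = (1 - e (- gm i)) * Dgen i f + (1 - e (- gm i)) * Dgen i g"
    by (rule distrib_left)
  also have "\<dots> = (f - e (- gm i) * sact A r i f) + (g - e (- gm i) * sact A r i g)"
    by (simp only: Dgen_eq[OF i])
  also have "\<dots> = (f + g) - (e (- gm i) * sact A r i f + e (- gm i) * sact A r i g)"
    by (simp only: diff_conv_add_uminus minus_add add_ac)
  also have "\<dots> = (f + g) - e (- gm i) * sact A r i (f + g)"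
    by (simp only: sact_add[OF i] distrib_left)
  finally have eq: "(1 - e (- gm i)) * (Dgen i f + Dgen i g) = (f + g) - e (- gm i) * sact A r i (f + g)" .
  show ?thesis using demazure_char[OF i eq] demazure_Dgen[OF i] by simp
qed

lemma dbar_add: "i \<in> R \<Longrightarrow> demazure_bar A r i (f + g) = demazure_bar A r i f + demazure_bar A r i g"
  unfolding demazure_bar_def by (simp add: demazure_add)

lemma dbar_single: "i \<in> R \<Longrightarrow> demazure_bar A r i (e v) = dm i v - e v"
  unfolding demazure_bar_def by (simp add: demazure_Dgen Dgen_def)

lemma dbar_keys: "i \<in> R \<Longrightarrow> ks (demazure_bar A r i f) \<subseteq> (\<Union>v\<in>ks f. ks (dm i v - e v))"
proof -
  assume i: "i \<in> R"
  define c where "c = (\<lambda>v. Poly_Mapping.single 0 (lk f v) :: wt \<Rightarrow>\<^sub>0 int)"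
  have f_rev: "(\<Sum>v\<in>ks f. c v * e v) = f"
  proof -
    have "(\<Sum>v\<in>ks f. c v * e v) = (\<Sum>v\<in>ks f. Poly_Mapping.single v (lk f v))"
      unfolding c_def by (rule sum.cong) (simp_all only: single_scale[symmetric])
    then show ?thesis using pm_decomp[of f] by simp
  qed
  have e1: "demazure_bar A r i f = Dgen i f - f" unfolding demazure_bar_def demazure_Dgen[OF i] ..
  have e2: "Dgen i f = (\<Sum>v\<in>ks f. c v * dm i v)" unfolding Dgen_def c_def ..
  have "demazure_bar A r i f = (\<Sum>v\<in>ks f. c v * dm i v) - (\<Sum>v\<in>ks f. c v * e v)"
    by (simp only: e1 e2 f_rev)
  also have "\<dots> = (\<Sum>v\<in>ks f. c v * (dm i v - e v))"
    by (simp only: right_diff_distrib sum_subtractf)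
  finally have "demazure_bar A r i f = (\<Sum>v\<in>ks f. c v * (dm i v - e v))" .
  moreover have "ks (\<Sum>v\<in>ks f. c v * (dm i v - e v)) \<subseteq> (\<Union>v\<in>ks f. ks (c v * (dm i v - e v)))"
    by (rule keys_sum_sub)
  moreover have "(\<Union>v\<in>ks f. ks (c v * (dm i v - e v))) \<subseteq> (\<Union>v\<in>ks f. ks (dm i v - e v))"
    unfolding c_def by (intro UN_mono keys_scale) auto
  ultimately show ?thesis by simp
qed

end


lemma keys_uminus_pm: "ks (- f) = ks f"
  by (auto simp: in_keys_iff)

lemma keys_e: "ks (e v) = {v}" by simp

context RD
begin

definition strS :: "nat \<Rightarrow> wt \<Rightarrow> wt set" where
  "strS i x = {x - smul k (gm i) | k. (0 \<le> k \<and> k \<le> x i) \<or> (x i \<le> k \<and> k \<le> 0)}"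

lemma dm_keys: assumes i: "i \<in> R" shows "ks (dm i v - e v) \<subseteq> strS i v"
proof -
  have v: "v \<in> strS i v" unfolding strS_def by (intro CollectI exI[of _ 0]) (auto simp: smul_0)
  have "ks (dm i v) \<subseteq> strS i v"
  proof (cases "v i \<ge> 0")
    case True
    have "ks (dm i v) \<subseteq> (\<Union>k\<in>{..<Suc (nat (v i))}. ks (e (v - smul (int k) (gm i))))"
      unfolding dm_def using True by (simp only: if_True) (rule keys_sum_sub)
    also have "\<dots> \<subseteq> strS i v" unfolding strS_def using True by auto
    finally show ?thesis .
  next
    case False
    have "ks (dm i v) \<subseteq> (\<Union>k\<in>{..<nat (- v i) - 1}. ks (e (v + smul (int (Suc k)) (gm i))))"
      unfolding dm_def using False by (simp only: if_False keys_uminus_pm) (rule keys_sum_sub)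
    also have "\<dots> \<subseteq> strS i v"
    proof
      fix x assume "x \<in> (\<Union>k\<in>{..<nat (- v i) - 1}. ks (e (v + smul (int (Suc k)) (gm i))))"
      then obtain k where k: "k < nat (- v i) - 1" "x = v + smul (int (Suc k)) (gm i)" by auto
      have "x = v - smul (- int (Suc k)) (gm i)" using k by (simp add: fun_eq_iff algebra_simps)
      moreover have "v i \<le> - int (Suc k) \<and> - int (Suc k) \<le> 0" using k False by auto
      ultimately show "x \<in> strS i v" unfolding strS_def by blast
    qed
    finally show ?thesis .
  qed
  then show ?thesis using keys_diff_sub[of "dm i v" "e v"] v by auto
qed

lemma dm_pos: assumes i: "i \<in> R" and pos: "v i > 0"
  shows "dm i v - e v = e (sr i v) + (\<Sum>k<nat (v i) - 1. e (v - smul (int (Suc k)) (gm i)))"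
proof -
  define m where "m = nat (v i)"
  have m: "m \<ge> 1" "v i = int m" using pos m_def by auto
  define F where "F = (\<lambda>k::nat. e (v - smul (int k) (gm i)))"
  have "dm i v = (\<Sum>k<Suc m. F k)" unfolding dm_def F_def m_def using pos by simp
  also have "\<dots> = F 0 + (\<Sum>k<m. F (Suc k))" by (rule sum.lessThan_Suc_shift)
  also have "(\<Sum>k<m. F (Suc k)) = (\<Sum>k<Suc (m - 1). F (Suc k))" using m by simp
  also have "\<dots> = (\<Sum>k<m - 1. F (Suc k)) + F (Suc (m - 1))" by (rule sum.lessThan_Suc)
  also have "F 0 = e v" unfolding F_def by (simp add: smul_0)
  also have "F (Suc (m - 1)) = e (sr i v)" unfolding F_def using m by (simp add: sr_form)
  finally show ?thesis unfolding F_def m_def by (simp add: algebra_simps)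
qed

definition below :: "wt \<Rightarrow> wt \<Rightarrow> bool" where
  "below d x \<longleftrightarrow> (\<forall>u\<in>W. Qp (d - u x))"

lemma str_below: assumes i: "i \<in> R" and y: "y \<in> strS i x" and b: "below d x" shows "below d y"
  unfolding below_def
proof
  fix u assume u: "u \<in> W"
  obtain k where k: "y = x - smul k (gm i)" "(0 \<le> k \<and> k \<le> x i) \<or> (x i \<le> k \<and> k \<le> 0)"
    using y unfolding strS_def by blast
  have u2: "u \<circ> sr i \<in> W" using W_comp u sref_W i by blast
  have Q1: "Qp (d - u x)" using b u unfolding below_def by blast
  have Q2: "Qp (d - u (sr i x))" using b u2 unfolding below_def by auto
  have uy: "u y = u x - smul k (u (gm i))" using k(1) W_lin[OF u] by (simp only: lin_diff lin_smul)
  have e1: "d - u y = (d - u x) + smul k (u (gm i))"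
    by (simp add: uy fun_eq_iff)
  have e2: "d - u y = (d - u (sr i x)) + smul (k - x i) (u (gm i))"
  proof -
    have yy: "y = sr i x + smul (x i - k) (gm i)" using k(1) by (simp add: sr_form fun_eq_iff algebra_simps)
    have "u y = u (sr i x) + smul (x i - k) (u (gm i))" unfolding yy by (simp only: lin_add[OF W_lin[OF u]] lin_smul[OF W_lin[OF u]])
    then show ?thesis by (simp add: fun_eq_iff algebra_simps)
  qed
  have e1': "d - u y = (d - u x) + smul (- k) (- u (gm i))" using e1 by (simp add: fun_eq_iff)
  have e2': "d - u y = (d - u (sr i x)) + smul (x i - k) (- u (gm i))" using e2 by (simp add: fun_eq_iff algebra_simps)
  show "Qp (d - u y)"
  proof (cases "len u \<le> len (u \<circ> sr i)")
    case True
    then have q: "Qp (u (gm i))" using dich u i by blast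
    show ?thesis
    proof (cases "k \<ge> 0")
      case True then show ?thesis unfolding e1 using Qp_add_smul[OF Q1 q] by simp
    next
      case False then have "k - x i \<ge> 0" using k(2) by auto
      then show ?thesis unfolding e2 using Qp_add_smul[OF Q2 q] by simp
    qed
  next
    case False
    then have q: "Qp (- u (gm i))" using dich_neg u i by simp
    show ?thesis
    proof (cases "k \<le> 0")
      case True then show ?thesis unfolding e1' using Qp_add_smul[OF Q1 q] by simp
    next
      case False then have "x i - k \<ge> 0" using k(2) by auto
      then show ?thesis unfolding e2' using Qp_add_smul[OF Q2 q] by simp
    qed
  qed
qed

lemma B_str: assumes i: "i \<in> R"
  shows "B (x - smul k (gm i)) (x - smul k (gm i)) = B x x - k * (x i - k) * gn i"
proof -
  define z where "z = x - smul k (gm i)"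
  have h1: "B z z = B x x - k * (2 * B x (gm i)) + k * k * gn i"
    unfolding z_def by (simp add: B_diff_left B_diff_right B_smul_left B_smul_right B_sym gn_def algebra_simps)
  have h2: "2 * B x (gm i) = x i * gn i" using B_key[OF i, of x] by (simp add: gn_def)
  have "B z z = B x x - k * (x i * gn i) + k * k * gn i" using h1 unfolding h2 .
  then have "B z z = B x x - k * (x i - k) * gn i" by (simp add: algebra_simps)
  then show ?thesis unfolding z_def .
qed

lemma str_B: assumes i: "i \<in> R" and y: "y \<in> strS i x" shows "B y y \<le> B x x"
proof -
  obtain k where k: "y = x - smul k (gm i)" "(0 \<le> k \<and> k \<le> x i) \<or> (x i \<le> k \<and> k \<le> 0)"
    using y unfolding strS_def by blast
  have "k * (x i - k) \<ge> 0" using k(2) by (auto intro: mult_nonneg_nonneg mult_nonpos_nonpos)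
  then have "k * (x i - k) * gn i \<ge> 0" using gn_pos[OF i] by simp
  then show ?thesis using B_str[OF i, of x k] k(1) by simp
qed

lemma str_B_strict: assumes i: "i \<in> R" and k: "0 < k" "k < x i"
  shows "B (x - smul k (gm i)) (x - smul k (gm i)) < B x x"
proof -
  have "k * (x i - k) > 0" using k by simp
  then have "k * (x i - k) * gn i > 0" using gn_pos[OF i] by simp
  then show ?thesis using B_str[OF i, of x k] by simp
qed

lemma str_lattice: "y \<in> strS i x \<Longrightarrow> in_lattice r x \<Longrightarrow> in_lattice r y"
  unfolding strS_def in_lattice_def by (auto simp: gm_apply)

end


context RD
begin

lemma fund_sum_dom: "dominant r (fund_sum r J)"
  unfolding dominant_def in_lattice_def fund_sum_def by auto

lemma fund_sum_R: "j \<in> R \<Longrightarrow> fund_sum r J j = (if j \<in> J then 1 else 0)"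
  unfolding fund_sum_def by auto

lemma Qp_sum': "finite S \<Longrightarrow> (\<forall>j\<in>S. Qp (f j)) \<Longrightarrow> Qp (\<Sum>j\<in>S. f j)"
  by (induction S rule: finite_induct) (auto intro: Qp_add Qp_0)

lemma Qp_comb_image:
  assumes u: "u \<in> W" and h: "\<And>k. k \<in> R \<Longrightarrow> n k \<noteq> 0 \<Longrightarrow> len u \<le> len (u \<circ> sr k)"
  shows "Qp (u (comb n))"
proof -
  have "u (comb n) = (\<Sum>j\<in>R. smul (int (n j)) (u (gm j)))" using lin_comb W_lin[OF u] by blast
  moreover have "\<forall>j\<in>R. Qp (smul (int (n j)) (u (gm j)))"
  proof
    fix j assume j: "j \<in> R"
    show "Qp (smul (int (n j)) (u (gm j)))"
    proof (cases "n j = 0")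
      case True then show ?thesis using Qp_0 by (simp add: smul_0)
    next
      case False then show ?thesis using Qp_smul dich[OF u j h[OF j False]] by blast
    qed
  qed
  ultimately show ?thesis using Qp_sum'[of R] by simp
qed

lemma B_dom_zero:
  assumes d: "dominant r d" and z: "B d (comb n) = 0" and k: "k \<in> R" "d k > 0"
  shows "n k = 0"
proof -
  have "(\<Sum>j\<in>R. int (n j) * d j * gn j) = 0" using B_comb[of d n] z by simp
  moreover have "\<forall>j\<in>R. int (n j) * d j * gn j \<ge> 0"
    using d gn_pos unfolding dominant_def by (simp add: order.strict_implies_order)
  ultimately have "\<forall>j\<in>R. int (n j) * d j * gn j = 0" by (subst sum_nonneg_eq_0_iff[symmetric]) auto
  then show ?thesis using k gn_pos[OF k(1)] by auto
qed

lemma mu_pos: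
  assumes J: "J \<subseteq> R" and w': "w' \<in> W" and i: "i \<in> R" and w: "w = sr i \<circ> w'"
    and lw: "len w' < len w" and D: "descents A r w \<subseteq> J"
  shows "w' (fund_sum r J) i > 0"
proof (rule ccontr)
  assume np: "\<not> w' (fund_sum r J) i > 0"
  define lam where "lam = fund_sum r J"
  have wW: "w \<in> W" using w W_comp sref_W i w' by blast
  have "len w' \<le> len (sr i \<circ> w')" using lw w by simp
  then have "Qp (inv w' (gm i))" using dich_left w' i by blast
  then obtain n where n: "inv w' (gm i) = comb n" unfolding Qp_def by auto
  have "w' lam i * gn i = 2 * B (w' lam) (gm i)" using coord_B i by simp
  also have "\<dots> = 2 * B (inv w' (w' lam)) (inv w' (gm i))" using B_inv[OF W_inv_in[OF w']] by simp
  also have "\<dots> = 2 * B lam (comb n)" using W_inv_l[OF w'] n by simp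
  finally have eq: "w' lam i * gn i = 2 * B lam (comb n)" .
  have "B lam (comb n) \<ge> 0" using dominant_B[OF fund_sum_dom] Qp_def lam_def by blast
  moreover have "w' lam i * gn i \<le> 0" using np gn_pos[OF i] lam_def by (simp add: mult_nonpos_nonneg)
  ultimately have z: "B lam (comb n) = 0" using eq by simp
  have nz: "\<And>k. k \<in> R \<Longrightarrow> k \<in> J \<Longrightarrow> n k = 0"
    using B_dom_zero[OF fund_sum_dom[of J] z[unfolded lam_def]] fund_sum_R by simp
  have "Qp (w (comb n))"
  proof (rule Qp_comb_image[OF wW])
    fix k assume k: "k \<in> R" "n k \<noteq> 0"
    then have "k \<notin> J" using nz[OF k(1)] by auto
    then have "k \<notin> descents A r w" using D by blast
    then show "len w \<le> len (w \<circ> sr k)" using descents_iff k by auto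
  qed
  moreover have "w (comb n) = - gm i"
    using n[symmetric] w W_inv_r[OF w'] sref_gm[OF i] by simp
  ultimately have "Qp (- gm i)" by simp
  then have "gm i = 0" using Qp_antisym Qp_gm[OF i] by blast
  then show False using gm_nonzero[OF i] by simp
qed

definition good :: "wt \<Rightarrow> (wt \<Rightarrow>\<^sub>0 int) \<Rightarrow> bool" where
  "good lam c \<longleftrightarrow> (\<forall>v\<in>ks c. in_lattice r v \<and> below lam v \<and> B v v < B lam lam)"

lemma main_ind:
  assumes J: "J \<subseteq> R"
  shows "reduced_word A r w ws \<Longrightarrow> descents A r w \<subseteq> J \<Longrightarrow>
    \<exists>c. foldr (\<lambda>i g. demazure_bar A r i \<circ> g) ws id (e (fund_sum r J)) = e (w (fund_sum r J)) + c
        \<and> good (fund_sum r J) c"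
proof (induction ws arbitrary: w)
  case Nil
  then have "w = id" using reduced_len by fastforce
  then show ?case by (intro exI[of _ 0]) (simp add: good_def)
next
  case (Cons i ws)
  define lam where "lam = fund_sum r J"
  obtain i0: "i \<in> R" and red: "reduced_word A r (wm ws) ws" and w: "w = sr i \<circ> wm ws"
    using reduced_tail[OF Cons.prems(1)] by blast
  define w' where "w' = wm ws"
  have w'W: "w' \<in> W" using reduced_len[OF red] w'_def by simp
  have la: "length ws = len w'" using reduced_len[OF red] w'_def by simp
  have lb: "length (i # ws) = len w" using reduced_len[OF Cons.prems(1)] by blast
  have lw: "len w' + 1 = len w" using la lb by simp
  have D': "descents A r w' \<subseteq> J"
  proof
    fix j assume "j \<in> descents A r w'"
    then have j: "j \<in> R" "len (w' \<circ> sr j) < len w'" using descents_iff by auto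
    have "len (w \<circ> sr j) = len (sr i \<circ> (w' \<circ> sr j))" using w w'_def by (simp add: o_assoc)
    also have "\<dots> \<le> len (w' \<circ> sr j) + 1" using len_sr_left[OF i0] W_comp[OF w'W sref_W[OF j(1)]] by blast
    finally have "len (w \<circ> sr j) < len w" using j lw by simp
    then have "j \<in> descents A r w" using descents_iff j by auto
    then show "j \<in> J" using Cons.prems(2) by blast
  qed
  obtain c' where c': "foldr (\<lambda>i g. demazure_bar A r i \<circ> g) ws id (e lam) = e (w' lam) + c'" "good lam c'"
    using Cons.IH[OF red[folded w'_def] D'] lam_def w'_def by blast
  define mu where "mu = w' lam"
  have mupos: "mu i > 0" using mu_pos[OF J w'W i0 w[folded w'_def]] lw Cons.prems(2) mu_def lam_def by simp
  define m where "m = nat (mu i)"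
  define c where "c = (\<Sum>k<m - 1. e (mu - smul (int (Suc k)) (gm i))) + demazure_bar A r i c'"
  have s1: "foldr (\<lambda>i g. demazure_bar A r i \<circ> g) (i # ws) id (e lam)
        = demazure_bar A r i (foldr (\<lambda>i g. demazure_bar A r i \<circ> g) ws id (e lam))"
    by (simp only: foldr.simps comp_apply)
  have s2: "foldr (\<lambda>i g. demazure_bar A r i \<circ> g) ws id (e lam) = e mu + c'" using c'(1) mu_def by simp
  have s3: "demazure_bar A r i (e mu + c') = demazure_bar A r i (e mu) + demazure_bar A r i c'"
    by (rule dbar_add[OF i0])
  have s4: "demazure_bar A r i (e mu) = e (sr i mu) + (\<Sum>k<m - 1. e (mu - smul (int (Suc k)) (gm i)))"
    using dbar_single[OF i0, of mu] dm_pos[of i mu, OF i0 mupos] m_def by simp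
  have swl: "sr i mu = w lam" using w w'_def mu_def by simp
  have eq: "foldr (\<lambda>i g. demazure_bar A r i \<circ> g) (i # ws) id (e lam) = e (w lam) + c"
    unfolding s1 s2 s3 s4 swl c_def by (simp only: add.assoc)
  have lat_mu: "in_lattice r mu" using W_lattice[OF w'W] fund_sum_dom[of J] mu_def lam_def
    unfolding dominant_def by blast
  have below_mu: "below lam mu"
    unfolding below_def mu_def
  proof
    fix u assume "u \<in> W"
    then have "u \<circ> w' \<in> W" using W_comp w'W by blast
    then show "Qp (lam - u (w' lam))" using D1[OF fund_sum_dom[of J]] lam_def by fastforce
  qed
  have Bmu: "B mu mu = B lam lam" using B_inv[OF w'W] mu_def by simp
  have "good lam c"
    unfolding good_def
  proof
    fix v assume v: "v \<in> ks c"
    have "ks c \<subseteq> ks (\<Sum>k<m - 1. e (mu - smul (int (Suc k)) (gm i))) \<union> ks (demazure_bar A r i c')"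
      unfolding c_def by (rule keys_add)
    then consider (a) "v \<in> ks (\<Sum>k<m - 1. e (mu - smul (int (Suc k)) (gm i)))"
      | (b) "v \<in> ks (demazure_bar A r i c')" using v by blast
    then show "in_lattice r v \<and> below lam v \<and> B v v < B lam lam"
    proof cases
      case a
      have "v \<in> (\<Union>k\<in>{..<m - 1}. ks (e (mu - smul (int (Suc k)) (gm i))))"
        using keys_sum_sub a by blast
      then obtain k where k: "k < m - 1" "v \<in> ks (e (mu - smul (int (Suc k)) (gm i)))" by blast
      then have k2: "v = mu - smul (int (Suc k)) (gm i)" by simp
      have kk: "0 < int (Suc k)" "int (Suc k) < mu i" using k(1) m_def mupos by linarith+
      have vs: "v \<in> strS i mu" unfolding strS_def
        by (rule CollectI, rule exI[of _ "int (Suc k)"]) (use k2 kk in simp)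
      have "B v v < B mu mu" unfolding k2 by (rule str_B_strict[of i "int (Suc k)" mu, OF i0 kk])
      then show ?thesis using str_lattice[OF vs lat_mu] str_below[OF i0 vs below_mu] Bmu by simp
    next
      case b
      then obtain x where x: "x \<in> ks c'" "v \<in> ks (dm i x - e x)" using dbar_keys[OF i0] by blast
      have vs: "v \<in> strS i x" using dm_keys[OF i0] x(2) by blast
      have gx: "in_lattice r x" "below lam x" "B x x < B lam lam" using c'(2) x(1) unfolding good_def by auto
      have "B v v < B lam lam" using str_B[OF i0 vs] gx(3) by linarith
      then show ?thesis using str_lattice[OF vs gx(1)] str_below[OF i0 vs gx(2)] by blast
    qed
  qed
  then show ?case using eq lam_def by blast
qed

end


lemma sum_list_pos: "(\<forall>a\<in>set xs. 0 < (a::nat)) \<Longrightarrow> xs \<noteq> [] \<Longrightarrow> sum_list xs \<ge> 1"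
  by (cases xs) auto

lemma comp_desc_R: "is_composition (r + 1) al \<Longrightarrow> comp_descents al \<subseteq> {1..r}"
proof
  fix x assume c: "is_composition (r + 1) al" and x: "x \<in> comp_descents al"
  then obtain k where k: "1 \<le> k" "k < length al" "x = sum_list (take k al)" unfolding comp_descents_def by auto
  have pos: "\<forall>a\<in>set al. 0 < a" "sum_list al = r + 1" using c unfolding is_composition_def by auto
  have t1: "\<forall>a\<in>set (take k al). 0 < a" using pos(1) by (auto dest: in_set_takeD)
  have t2: "take k al \<noteq> []" using k by (cases al) auto
  have d1: "\<forall>a\<in>set (drop k al). 0 < a" using pos(1) by (auto dest: in_set_dropD)
  have d2: "drop k al \<noteq> []" using k by simp
  have "sum_list (take k al) \<ge> 1" using sum_list_pos[OF t1 t2] .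
  moreover have "sum_list (drop k al) \<ge> 1" using sum_list_pos[OF d1 d2] .
  moreover have "sum_list (take k al) + sum_list (drop k al) = r + 1"
    using pos(2) by (metis append_take_drop_id sum_list_append)
  ultimately show "x \<in> {1..r}" using k by auto
qed

context RD
begin

lemma descents_R: "descents A r u \<subseteq> R" unfolding descents_def by auto

lemma fund_sum_inj: "J \<subseteq> R \<Longrightarrow> D \<subseteq> R \<Longrightarrow> fund_sum r J = fund_sum r D \<Longrightarrow> J = D"
proof -
  assume J: "J \<subseteq> R" and D: "D \<subseteq> R" and eq: "fund_sum r J = fund_sum r D"
  have "j \<in> J \<longleftrightarrow> j \<in> D" for j
  proof (cases "j \<in> R")
    case True then show ?thesis using fun_cong[OF eq, of j] fund_sum_R by (auto split: if_splits)
  next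
    case False then show ?thesis using J D by auto
  qed
  then show ?thesis by blast
qed

lemma desc_part:
  assumes J: "J \<subseteq> R" and w: "w \<in> W" and D: "descents A r w \<subseteq> J"
  shows "is_descent_monomial A r (e (w (fund_sum r J))) \<longleftrightarrow> descents A r w = J"
proof
  assume "descents A r w = J"
  then show "is_descent_monomial A r (e (w (fund_sum r J)))"
    unfolding is_descent_monomial_def descent_monomial_def using w by blast
next
  assume "is_descent_monomial A r (e (w (fund_sum r J)))"
  then obtain u where u: "u \<in> W" "e (w (fund_sum r J)) = e (u (fund_sum r (descents A r u)))"
    unfolding is_descent_monomial_def descent_monomial_def by blast
  define lam where "lam = fund_sum r J"
  have wu: "w lam = u (fund_sum r (descents A r u))" using u(2) e_eq_iff lam_def by simp
  have "(inv u \<circ> w) lam = fund_sum r (descents A r u)" using wu W_inv_l[OF u(1)] by simp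
  moreover have "inv u \<circ> w \<in> W" using W_comp W_inv_in u w by blast
  ultimately have "lam = fund_sum r (descents A r u)"
    using dom_unique[OF fund_sum_dom fund_sum_dom] lam_def by blast
  then have Du: "descents A r u = J" using fund_sum_inj[OF J descents_R] lam_def by simp
  have wu2: "w lam = u lam" using wu Du lam_def by simp
  define x where "x = inv u \<circ> w"
  have xW: "x \<in> W" using W_comp W_inv_in u w x_def by blast
  have xl: "x lam = lam" using wu2 W_inv_l[OF u(1)] x_def by simp
  have ux: "u \<circ> x = w" using W_inv[OF u(1)] x_def by (simp add: o_assoc)
  have "x = id"
  proof (rule ccontr)
    assume "x \<noteq> id"
    then have "len x > 0" using len_0 xW by (metis gr0I)
    then obtain j x1 where j: "j \<in> R" "x1 \<in> W" "x = x1 \<circ> sr j" "len x1 + 1 = len x"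
      using last_letter[OF xW] by blast
    have "x \<circ> sr j = x1" using j sr_cancel_right[OF j(1)] by simp
    then have "len (x \<circ> sr j) < len x" using j by simp
    then have "Qp (- x (gm j))" using dich_neg xW j(1) by blast
    then obtain n where n: "- x (gm j) = comb n" unfolding Qp_def by auto
    have il: "inv x lam = lam" using xl W_inv_l[OF xW] by metis
    have "B lam (x (gm j)) = B (inv x lam) (inv x (x (gm j)))" using B_inv[OF W_inv_in[OF xW]] by simp
    also have "\<dots> = B lam (gm j)" using il W_inv_l[OF xW] by simp
    finally have e1: "B lam (x (gm j)) = B lam (gm j)" .
    have "2 * B lam (gm j) = lam j * gn j" using coord_B[OF j(1)] by simp
    then have "B lam (gm j) \<ge> 0" using fund_sum_R[OF j(1)] gn_pos[OF j(1)] lam_def by (auto split: if_splits)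
    moreover have "B lam (comb n) = - B lam (x (gm j))" using n[symmetric] B_neg_right by simp
    moreover have "B lam (comb n) \<ge> 0" using dominant_B[OF fund_sum_dom] lam_def Qp_def by blast
    ultimately have z: "B lam (comb n) = 0" and z2: "B lam (gm j) = 0" using e1 by auto
    have jJ: "j \<notin> J"
    proof
      assume "j \<in> J"
      then have "2 * B lam (gm j) = gn j" using coord_B[OF j(1), of lam] fund_sum_R[OF j(1)] lam_def by simp
      then show False using z2 gn_pos[OF j(1)] by simp
    qed
    have nz: "\<And>k. k \<in> R \<Longrightarrow> k \<in> J \<Longrightarrow> n k = 0"
      using B_dom_zero[OF fund_sum_dom[of J] z[unfolded lam_def]] fund_sum_R by simp
    have "Qp (u (comb n))"
    proof (rule Qp_comb_image[OF u(1)])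
      fix k assume k: "k \<in> R" "n k \<noteq> 0"
      then have "k \<notin> J" using nz[OF k(1)] by auto
      then show "len u \<le> len (u \<circ> sr k)" using Du descents_iff k by auto
    qed
    moreover have "u (comb n) = - w (gm j)" using n[symmetric] ux W_neg[OF u(1)] by auto
    ultimately have q1: "Qp (- w (gm j))" by simp
    have "j \<notin> descents A r w" using D jJ by blast
    then have "len w \<le> len (w \<circ> sr j)" using descents_iff j(1) by auto
    then have "Qp (w (gm j))" using dich w j(1) by blast
    then have "w (gm j) = 0" using q1 Qp_antisym by blast
    then show False using W_nonzero[OF w gm_nonzero[OF j(1)]] by simp
  qed
  then have "w = u" using ux by simp
  then show "descents A r w = J" using Du by simp
qed

end

theorem lemma5p2:
  fixes A :: "nat \<Rightarrow> nat \<Rightarrow> int" and r :: nat and al :: "nat list" and w :: "wt \<Rightarrow> wt"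
  assumes "root_datum A r"
    and "is_composition (r + 1) al"
    and "w \<in> weyl A r"
    and "descents A r w \<subseteq> comp_descents al"
  shows "(\<exists>c :: wt \<Rightarrow>\<^sub>0 int.
            demazure_bar_w A r w (Poly_Mapping.single (fund_sum r (comp_descents al)) 1)
              = Poly_Mapping.single (w (fund_sum r (comp_descents al))) 1 + c
          \<and> (\<forall>lam\<in>Poly_Mapping.keys c. in_lattice r lam
                \<and> weight_less A r (dom_rep A r lam) (fund_sum r (comp_descents al))))
       \<and> (is_descent_monomial A r (Poly_Mapping.single (w (fund_sum r (comp_descents al))) 1)
            \<longleftrightarrow> descents A r w = comp_descents al)"
proof -
  interpret RD A r by unfold_locales (rule assms(1))
  define J where "J = comp_descents al"
  define lam where "lam = fund_sum r J"
  have JR: "J \<subseteq> R" using comp_desc_R[OF assms(2)] J_def by simp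
  have D: "descents A r w \<subseteq> J" using assms(4) J_def by simp
  obtain ws where ws: "reduced_word A r w ws" using reduced_ex[OF assms(3)] by blast
  define ws0 where "ws0 = (SOME ws. reduced_word A r w ws)"
  have ws0: "reduced_word A r w ws0" unfolding ws0_def using ws by (rule someI)
  have dbw: "demazure_bar_w A r w = foldr (\<lambda>i g. demazure_bar A r i \<circ> g) ws0 id"
    unfolding demazure_bar_w_def ws0_def ..
  obtain c where c: "foldr (\<lambda>i g. demazure_bar A r i \<circ> g) ws0 id (e lam) = e (w lam) + c" "good lam c"
    using main_ind[OF JR ws0 D] lam_def by blast
  have part1: "\<forall>v\<in>ks c. in_lattice r v \<and> weight_less A r (dom_rep A r v) lam"
  proof
    fix v assume v: "v \<in> ks c"
    then have g: "in_lattice r v" "below lam v" "B v v < B lam lam" using c(2) unfolding good_def by auto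
    obtain u where u: "u \<in> W" "u v = dom_rep A r v" using dom_rep[OF g(1)] by blast
    have "Qp (lam - dom_rep A r v)" using g(2) u unfolding below_def by auto
    then have le: "weight_le A r (dom_rep A r v) lam" using weight_le_Qp by simp
    have "B (dom_rep A r v) (dom_rep A r v) = B v v" using u B_inv by metis
    then have "dom_rep A r v \<noteq> lam" using g(3) by auto
    then show "in_lattice r v \<and> weight_less A r (dom_rep A r v) lam"
      using le g(1) unfolding weight_less_def by simp
  qed
  have part2: "is_descent_monomial A r (e (w lam)) \<longleftrightarrow> descents A r w = J"
    using desc_part[OF JR assms(3) D] lam_def by simp
  show ?thesis using part1 part2 c(1) dbw unfolding J_def[symmetric] lam_def[symmetric] by auto
qed


end
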